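(* Let $n=2$ or $n=3$, let $f\in C^3(\mathbb{R}^n)$, $g\in C^2(\mathbb{R}^n)$, and suppose there exist $R>0$, $C_0>0$, $\kappa>0$ with $f(x)>0$ and $\frac{f(x)}{1+|x|}-|\nabla f(x)|+g(x)\ge\frac{C_0}{(1+|x|)^{1+\kappa}}$ for $|x|\ge R$. Let $u^0$ solve $u^0_{tt}-\Delta u^0=0$ in $\mathbb{R}^n\times[0,\infty)$, $u^0(x,0)=f(x)$, $u^0_t(x,0)=g(x)$. Then for all $(x,t)\in\Sigma_2:=\{(x,t)\in\mathbb{R}^n\times(0,\infty): |x|-t\ge\max\{R,t-1\}\}$: if $n=3$, $$u^0(x,t)\ge\frac{t}{4\pi}\int_{|\omega|=1}\Big\{\frac{f(x+t\omega)}{1+|x+t\omega|}-|\nabla f(x+t\omega)|+g(x+t\omega)\Big\}dS_\omega;$$ if $n=2$, $$u^0(x,t)\ge\frac{1}{2\pi}\int_0^t\frac{\rho\,d\rho}{\sqrt{t^2-\rho^2}}\int_{|\omega|=1}\Big\{\frac{f(x+\rho\omega)}{1+|x+\rho\omega|}-|\nabla f(x+\rho\omega)|+g(x+\rho\omega)\Big\}dS_\omega.$$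
   Context: $dS_\omega$ denotes surface measure on the unit sphere (unit circle when $n=2$). *)

theory Defs
  imports "HOL-Analysis.Analysis"
begin

definition pdiff :: "'a::euclidean_space set \<Rightarrow> ('a \<Rightarrow> real) \<Rightarrow> 'a \<Rightarrow> 'a \<Rightarrow> real" where
  "pdiff S h v p = frechet_derivative h (at p within S) v"

fun cont_diff :: "nat \<Rightarrow> ('a::euclidean_space \<Rightarrow> real) \<Rightarrow> 'a set \<Rightarrow> bool" where
  "cont_diff 0 h S = continuous_on S h"
| "cont_diff (Suc k) h S =
     (continuous_on S h \<and> (\<forall>p\<in>S. h differentiable (at p within S)) \<and>
      (\<forall>i\<in>Basis. cont_diff k (pdiff S h i) S))"

definition grad :: "('a::euclidean_space \<Rightarrow> real) \<Rightarrow> 'a \<Rightarrow> 'a" where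
  "grad f x = (\<Sum>i\<in>Basis. frechet_derivative f (at x) i *\<^sub>R i)"

definition wave_sol :: "('n::euclidean_space \<times> real \<Rightarrow> real) \<Rightarrow> ('n \<Rightarrow> real) \<Rightarrow> ('n \<Rightarrow> real) \<Rightarrow> bool" where
  "wave_sol u f g \<longleftrightarrow>
     cont_diff 2 u (UNIV \<times> {0..}) \<and>
     (\<forall>p\<in>UNIV \<times> {0..}.
        pdiff (UNIV \<times> {0..}) (pdiff (UNIV \<times> {0..}) u (0, 1)) (0, 1) p =
        (\<Sum>i\<in>Basis. pdiff (UNIV \<times> {0..}) (pdiff (UNIV \<times> {0..}) u (i, 0)) (i, 0) p)) \<and>
     (\<forall>x. u (x, 0) = f x \<and> pdiff (UNIV \<times> {0..}) u (0, 1) (x, 0) = g x)"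

definition sphere_int2 :: "(real^2 \<Rightarrow> real) \<Rightarrow> real" where
  "sphere_int2 h = integral {0..2*pi} (\<lambda>\<phi>. h (vector [cos \<phi>, sin \<phi>]))"

text \<open>Integral over the unit sphere in R^3 w.r.t. surface measure (spherical coordinates).\<close>
definition sphere_int3 :: "(real^3 \<Rightarrow> real) \<Rightarrow> real" where
  "sphere_int3 h = integral {0..pi} (\<lambda>\<theta>. integral {0..2*pi}
      (\<lambda>\<phi>. h (vector [sin \<theta> * cos \<phi>, sin \<theta> * sin \<phi>, cos \<theta>]) * sin \<theta>))"

end

theory Submission
  imports Defs
begin

lemma ftc_at:
  fixes f f' :: "real \<Rightarrow> real"
  assumes "a \<le> b" "\<And>x. x \<in> {a..b} \<Longrightarrow> (f has_real_derivative f' x) (at x)"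
  shows "integral {a..b} f' = f b - f a"
proof -
  have "(f' has_integral (f b - f a)) {a..b}"
    apply (rule fundamental_theorem_of_calculus[OF assms(1)])
    using assms(2) by (simp add: has_real_derivative_iff_has_vector_derivative has_vector_derivative_at_within)
  then show ?thesis by (rule integral_unique)
qed

lemma clairaut:
  fixes a ax ay axy ayx :: "real \<Rightarrow> real \<Rightarrow> real"
  assumes G: "open G" "(x0,y0) \<in> G"
    and dx: "\<And>x y. (x,y) \<in> G \<Longrightarrow> ((\<lambda>x. a x y) has_real_derivative ax x y) (at x)"
    and dy: "\<And>x y. (x,y) \<in> G \<Longrightarrow> ((\<lambda>y. a x y) has_real_derivative ay x y) (at y)"
    and dxy: "\<And>x y. (x,y) \<in> G \<Longrightarrow> ((\<lambda>y. ax x y) has_real_derivative axy x y) (at y)"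
    and dyx: "\<And>x y. (x,y) \<in> G \<Longrightarrow> ((\<lambda>x. ay x y) has_real_derivative ayx x y) (at x)"
    and c1: "continuous_on G (\<lambda>(x,y). axy x y)"
    and c2: "continuous_on G (\<lambda>(x,y). ayx x y)"
  shows "axy x0 y0 = ayx x0 y0"
proof (rule ccontr)
  define D where "D = (\<lambda>(x,y). axy x y - ayx x y)"
  define d where "d = axy x0 y0 - ayx x0 y0"
  assume "axy x0 y0 \<noteq> ayx x0 y0"
  then have d0: "\<bar>d\<bar> > 0" by (simp add: d_def)
  have cD: "continuous_on G D" unfolding D_def
    using continuous_on_diff[OF c1 c2] by (simp add: case_prod_beta')
  obtain e where e: "e > 0" "ball (x0,y0) e \<subseteq> G"
    using G openE by blast
  have "continuous (at (x0,y0)) D"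
    using cD G by (simp add: continuous_on_eq_continuous_at)
  then obtain e2 where e2: "e2 > 0" "\<And>z. dist z (x0,y0) < e2 \<Longrightarrow> dist (D z) (D (x0,y0)) < \<bar>d\<bar>/2"
    unfolding continuous_at_eps_delta using d0 by (metis half_gt_zero)
  define h where "h = min e e2 / 2"
  have h0: "h > 0" using e e2 by (simp add: h_def)
  define B where "B = cbox (x0,y0) (x0+h,y0+h)"
  have Bsub: "B \<subseteq> ball (x0,y0) (min e e2)"
  proof
    fix z assume "z \<in> B"
    then obtain x y where z: "z = (x,y)" "x0 \<le> x" "x \<le> x0+h" "y0 \<le> y" "y \<le> y0+h"
      by (cases z) (auto simp: B_def cbox_Pair_eq)
    have "dist (x0,y0) z = sqrt ((x0-x)^2 + (y0-y)^2)"
      by (simp add: z dist_Pair_Pair dist_real_def power2_commute)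
    also have "\<dots> \<le> sqrt (h^2 + h^2)"
      using z by (intro real_sqrt_le_mono add_mono) (simp_all add: power2_commute[of x0] power2_commute[of y0] power_mono)
    also have "\<dots> < 2*h" using h0
      by (intro real_less_lsqrt) (auto simp: power2_eq_square)
    also have "\<dots> = min e e2" by (simp add: h_def)
    finally show "z \<in> ball (x0,y0) (min e e2)" by simp
  qed
  then have BG: "B \<subseteq> G" using e(2) by (meson order.trans subset_ball min.cobounded1)
  have Bbound: "\<And>z. z \<in> B \<Longrightarrow> dist (D z) d < \<bar>d\<bar>/2"
  proof -
    fix z assume "z \<in> B"
    then have "dist z (x0,y0) < e2" using Bsub by (auto simp: dist_commute)
    then show "dist (D z) d < \<bar>d\<bar>/2" using e2(2)[of z] by (simp add: D_def d_def)
  qed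
  let ?x1 = "x0+h" and ?y1 = "y0+h"
  have inG: "(x,y) \<in> G" if "x \<in> {x0..?x1}" "y \<in> {y0..?y1}" for x y
  proof -
    have "(x,y) \<in> B" unfolding B_def cbox_Pair_eq using that by (simp add: cbox_interval)
    then show ?thesis using BG by blast
  qed
  have cBxy: "continuous_on B (\<lambda>(x,y). axy x y)" using c1 BG continuous_on_subset by blast
  have cByx: "continuous_on B (\<lambda>(x,y). ayx x y)" using c2 BG continuous_on_subset by blast
  define \<Delta> where "\<Delta> = a ?x1 ?y1 - a x0 ?y1 - (a ?x1 y0 - a x0 y0)"
  have I1: "integral {x0..?x1} (\<lambda>x. integral {y0..?y1} (\<lambda>y. axy x y)) = \<Delta>"
  proof -
    have "integral {x0..?x1} (\<lambda>x. integral {y0..?y1} (\<lambda>y. axy x y))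
        = integral {x0..?x1} (\<lambda>x. ax x ?y1 - ax x y0)"
      by (intro integral_cong ftc_at) (use h0 inG dxy in auto)
    also have "\<dots> = (a ?x1 ?y1 - a ?x1 y0) - (a x0 ?y1 - a x0 y0)"
      by (intro ftc_at) (use h0 inG dx in \<open>auto intro!: derivative_eq_intros\<close>)
    finally show ?thesis by (simp add: \<Delta>_def)
  qed
  have I2: "integral {y0..?y1} (\<lambda>y. integral {x0..?x1} (\<lambda>x. ayx x y)) = \<Delta>"
  proof -
    have "integral {y0..?y1} (\<lambda>y. integral {x0..?x1} (\<lambda>x. ayx x y))
        = integral {y0..?y1} (\<lambda>y. ay ?x1 y - ay x0 y)"
      by (intro integral_cong ftc_at) (use h0 inG dyx in auto)
    also have "\<dots> = (a ?x1 ?y1 - a x0 ?y1) - (a ?x1 y0 - a x0 y0)"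
      by (intro ftc_at) (use h0 inG dy in \<open>auto intro!: derivative_eq_intros\<close>)
    finally show ?thesis by (simp add: \<Delta>_def)
  qed
  have P1: "integral B (\<lambda>(x,y). axy x y) = \<Delta>"
    using integral_prod_continuous[of x0 y0 ?x1 ?y1 "\<lambda>(x,y). axy x y"] cBxy I1
    by (simp add: B_def)
  have "integral {y0..?y1} (\<lambda>y. integral {x0..?x1} (\<lambda>x. ayx x y))
      = integral {x0..?x1} (\<lambda>x. integral {y0..?y1} (\<lambda>y. ayx x y))"
    using integral_swap_continuous[of x0 y0 ?x1 ?y1 "\<lambda>x y. ayx x y"] cByx
    by (simp add: B_def)
  then have P2: "integral B (\<lambda>(x,y). ayx x y) = \<Delta>"
    using integral_prod_continuous[of x0 y0 ?x1 ?y1 "\<lambda>(x,y). ayx x y"] cByx I2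
    by (simp add: B_def)
  have "integral B D = integral B (\<lambda>(x,y). axy x y) - integral B (\<lambda>(x,y). ayx x y)"
    unfolding D_def B_def
    by (subst integral_diff[symmetric]) 
       (use cBxy cByx in \<open>auto simp: B_def case_prod_beta' intro!: integrable_continuous\<close>)
  then have ID0: "integral B D = 0" using P1 P2 by simp
  have cDB: "continuous_on B D" using cD BG continuous_on_subset by blast
  have intD: "D integrable_on B" unfolding B_def by (rule integrable_continuous) (use cDB B_def in simp)
  have cont: "Henstock_Kurzweil_Integration.content B = h*h" using h0 by (simp add: B_def content_Pair)
  show False
  proof (cases "d > 0")
    case True
    have "integral B (\<lambda>z. d/2) \<le> integral B D"
    proof (rule integral_le)
      show "(\<lambda>z. d/2) integrable_on B" unfolding B_def by (rule integrable_const)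
      show "D integrable_on B" by (rule intD)
      fix z assume "z \<in> B" then have "\<bar>D z - d\<bar> < \<bar>d\<bar>/2" using Bbound by (simp add: dist_real_def)
      then show "d/2 \<le> D z" using True by linarith
    qed
    then have "h*h*(d/2) \<le> 0" using ID0 cont by (simp add: B_def)
    moreover have "h*h*(d/2) > 0" using h0 True by simp
    ultimately show False by linarith
  next
    case False
    then have dn: "d < 0" using d0 by simp
    have "integral B D \<le> integral B (\<lambda>z. d/2)"
    proof (rule integral_le)
      show "(\<lambda>z. d/2) integrable_on B" unfolding B_def by (rule integrable_const)
      show "D integrable_on B" by (rule intD)
      fix z assume "z \<in> B" then have "\<bar>D z - d\<bar> < \<bar>d\<bar>/2" using Bbound by (simp add: dist_real_def)
      then show "D z \<le> d/2" using dn by linarith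
    qed
    then have "0 \<le> h*h*(d/2)" using ID0 cont by (simp add: B_def)
    moreover have "h*h*(d/2) < 0" using h0 dn by (simp add: mult_pos_neg)
    ultimately show False by linarith
  qed
qed

lemma vector3_eq: "(vector [a,b,c] :: real^3) = a *\<^sub>R axis 1 1 + b *\<^sub>R axis 2 1 + c *\<^sub>R axis 3 1"
  by (simp add: vec_eq_iff forall_3 axis_def)

lemma inner_vector3: "inner (vector [a,b,c] :: real^3) v = a * v$1 + b * v$2 + c * v$3"
  by (simp add: inner_vec_def sum_3)

lemma inner_vector3': "inner v (vector [a,b,c] :: real^3) = a * v$1 + b * v$2 + c * v$3"
  by (simp add: inner_vec_def sum_3 mult.commute)

lemma sum_Basis_vec3: "(\<Sum>b\<in>(Basis::(real^3) set). f b) = f (axis 1 1) + f (axis 2 1) + f (axis 3 1)"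
proof -
  have B: "(Basis::(real^3) set) = {axis 1 1, axis 2 1, axis 3 1}"
    by (auto simp: Basis_vec_def UNIV_3)
  have d: "axis 1 1 \<noteq> (axis 2 1 :: real^3)" "axis 1 1 \<noteq> (axis 3 1 :: real^3)" "axis 2 1 \<noteq> (axis 3 1 :: real^3)"
    by (auto simp: axis_eq_axis)
  show ?thesis unfolding B using d by (simp add: add.assoc)
qed

lemma linear_expand3:
  assumes "linear (M :: real^3 \<Rightarrow> real^3)"
  shows "M v = v$1 *\<^sub>R M (axis 1 1) + v$2 *\<^sub>R M (axis 2 1) + v$3 *\<^sub>R M (axis 3 1)"
proof -
  have "v = v$1 *\<^sub>R axis 1 1 + v$2 *\<^sub>R axis 2 1 + v$3 *\<^sub>R axis 3 1"
    by (simp add: vec_eq_iff forall_3 axis_def)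
  then have "M v = M (v$1 *\<^sub>R axis 1 1 + v$2 *\<^sub>R axis 2 1 + v$3 *\<^sub>R axis 3 1)" by simp
  also have "\<dots> = v$1 *\<^sub>R M (axis 1 1) + v$2 *\<^sub>R M (axis 2 1) + v$3 *\<^sub>R M (axis 3 1)"
    using assms by (simp add: linear_add linear_scale)
  finally show ?thesis .
qed

lemma inner_lin3:
  assumes "linear (M :: real^3 \<Rightarrow> real^3)"
  shows "inner (M v) w = (\<Sum>i\<in>UNIV. \<Sum>j\<in>UNIV. M (axis j 1) $ i * v$j * w$i)"
  by (subst linear_expand3[OF assms]) (simp add: inner_vec_def sum_3 algebra_simps)

lemma trace3:
  "(\<Sum>b\<in>(Basis::(real^3) set). inner (M b) b) = M (axis 1 1) $ 1 + M (axis 2 1) $ 2 + M (axis 3 1) $ 3"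
  by (simp add: sum_Basis_vec3 inner_axis)

definition om :: "real \<Rightarrow> real \<Rightarrow> real^3" where
  "om \<theta> \<phi> = vector [sin \<theta> * cos \<phi>, sin \<theta> * sin \<phi>, cos \<theta>]"
definition omt :: "real \<Rightarrow> real \<Rightarrow> real^3" where
  "omt \<theta> \<phi> = vector [cos \<theta> * cos \<phi>, cos \<theta> * sin \<phi>, - sin \<theta>]"
definition eph :: "real \<Rightarrow> real^3" where
  "eph \<phi> = vector [- sin \<phi>, cos \<phi>, 0]"

lemma frame3:
  assumes "linear (M :: real^3 \<Rightarrow> real^3)"
  shows "inner (M (om t p)) (om t p) + inner (M (omt t p)) (omt t p) + inner (M (eph p)) (eph p)
       = (\<Sum>b\<in>Basis. inner (M b) b)"
proof -
  have s1: "sin t ^ 2 + cos t ^ 2 = 1" "sin p ^ 2 + cos p ^ 2 = 1" by simp_all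
  show ?thesis
    unfolding trace3 unfolding inner_lin3[OF assms] om_def omt_def eph_def
    by (simp add: sum_3) (use s1 in algebra)
qed

lemma norm_om: "norm (om t p) = 1"
proof -
  have s1: "sin t ^ 2 + cos t ^ 2 = 1" "sin p ^ 2 + cos p ^ 2 = 1" by simp_all
  have "inner (om t p) (om t p) = 1"
    unfolding om_def inner_vector3 by simp (use s1 in algebra)
  then show ?thesis by (simp add: norm_eq_sqrt_inner)
qed

lemma within_to_at:
  fixes p :: "'a::euclidean_space \<times> real"
  assumes "snd p > 0" "(f has_derivative f') (at p within UNIV \<times> {0..})"
  shows "(f has_derivative f') (at p)"
proof -
  have "at p within UNIV \<times> {0..} = at p"
    by (rule at_within_open_subset[of _ "UNIV \<times> {0<..}"])
       (use assms(1) in \<open>auto simp: open_Times mem_Times_iff\<close>)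
  then show ?thesis using assms(2) by simp
qed

lemma chain_scalar:
  fixes R :: "real \<Rightarrow> 'a::real_inner \<times> real"
  assumes "(R has_derivative (\<lambda>h. h *\<^sub>R (v, c))) (at t0)"
    and "(f has_derivative (\<lambda>(h,\<tau>). inner a h + \<tau> * b)) (at (R t0))"
  shows "((\<lambda>t. f (R t)) has_real_derivative (inner a v + c * b)) (at t0)"
proof -
  have "((\<lambda>t. f (R t)) has_derivative (\<lambda>t. (\<lambda>(h,\<tau>). inner a h + \<tau> * b) (t *\<^sub>R (v, c)))) (at t0)"
    by (rule has_derivative_compose[OF assms(1) assms(2)])
  moreover have "(\<lambda>t. (\<lambda>(h,\<tau>). inner a h + \<tau> * b) (t *\<^sub>R (v, c))) = (\<lambda>t. (inner a v + c * b) * t)"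
    by (auto simp: fun_eq_iff algebra_simps)
  ultimately show ?thesis by (simp add: has_field_derivative_def)
qed

lemma chain_vec:
  fixes R :: "real \<Rightarrow> (real^'n) \<times> real"
  assumes "(R has_derivative (\<lambda>h. h *\<^sub>R (v, c))) (at t0)"
    and "(F has_derivative (\<lambda>(h,\<tau>). L h + \<tau> *\<^sub>R w)) (at (R t0))" and "linear L"
  shows "((\<lambda>t. F (R t) $ i) has_real_derivative ((L v + c *\<^sub>R w) $ i)) (at t0)"
proof -
  have "((\<lambda>t. F (R t)) has_derivative (\<lambda>t. (\<lambda>(h,\<tau>). L h + \<tau> *\<^sub>R w) (t *\<^sub>R (v, c)))) (at t0)"
    by (rule has_derivative_compose[OF assms(1) assms(2)])
  then have "((\<lambda>t. F (R t) $ i) has_derivative (\<lambda>t. ((\<lambda>(h,\<tau>). L h + \<tau> *\<^sub>R w) (t *\<^sub>R (v, c))) $ i)) (at t0)"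
    by (rule bounded_linear.has_derivative[OF bounded_linear_vec_nth])
  moreover have "(\<lambda>t. ((\<lambda>(h,\<tau>). L h + \<tau> *\<^sub>R w) (t *\<^sub>R (v, c))) $ i) = (\<lambda>t. ((L v + c *\<^sub>R w) $ i) * t)"
    using assms(3) by (auto simp: fun_eq_iff algebra_simps linear_scale)
  ultimately show ?thesis by (simp add: has_field_derivative_def)
qed

lemma om_deriv_t: "((\<lambda>t. om t p) has_derivative (\<lambda>h. h *\<^sub>R omt t p)) (at t)"
proof -
  have "((\<lambda>t. (sin t * cos p) *\<^sub>R axis 1 1 + (sin t * sin p) *\<^sub>R axis 2 1 + cos t *\<^sub>R (axis 3 1 :: real^3))
     has_derivative (\<lambda>h. (h * cos t * cos p) *\<^sub>R axis 1 1 + (h * cos t * sin p) *\<^sub>R axis 2 1 + (h * (- sin t)) *\<^sub>R (axis 3 1 :: real^3))) (at t)"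
    by (auto intro!: derivative_eq_intros simp: algebra_simps)
  moreover have "(\<lambda>h. (h * cos t * cos p) *\<^sub>R axis 1 1 + (h * cos t * sin p) *\<^sub>R axis 2 1 + (h * (- sin t)) *\<^sub>R (axis 3 1 :: real^3))
     = (\<lambda>h. h *\<^sub>R omt t p)"
    by (auto simp: fun_eq_iff omt_def vector3_eq algebra_simps)
  ultimately show ?thesis by (simp add: om_def vector3_eq)
qed

lemma om_deriv_p: "((\<lambda>p. om t p) has_derivative (\<lambda>h. h *\<^sub>R (sin t *\<^sub>R eph p))) (at p)"
proof -
  have "((\<lambda>p. (sin t * cos p) *\<^sub>R axis 1 1 + (sin t * sin p) *\<^sub>R axis 2 1 + cos t *\<^sub>R (axis 3 1 :: real^3))
     has_derivative (\<lambda>h. (sin t * (- (h * sin p))) *\<^sub>R axis 1 1 + (sin t * (h * cos p)) *\<^sub>R axis 2 1 + 0 *\<^sub>R (axis 3 1 :: real^3))) (at p)"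
    by (auto intro!: derivative_eq_intros simp: algebra_simps)
  moreover have "(\<lambda>h. (sin t * (- (h * sin p))) *\<^sub>R axis 1 1 + (sin t * (h * cos p)) *\<^sub>R axis 2 1 + 0 *\<^sub>R (axis 3 1 :: real^3))
     = (\<lambda>h. h *\<^sub>R (sin t *\<^sub>R eph p))"
    by (auto simp: fun_eq_iff eph_def vector3_eq algebra_simps)
  ultimately show ?thesis by (simp add: om_def vector3_eq)
qed

lemma path_s: "((\<lambda>s. (x + s *\<^sub>R w, T - s)) has_derivative (\<lambda>h. h *\<^sub>R (w, -1))) (at s0)"
  by (auto intro!: derivative_eq_intros simp: fun_eq_iff)

lemma path_t: "((\<lambda>t. (x + s *\<^sub>R om t p, \<tau>)) has_derivative (\<lambda>h. h *\<^sub>R (s *\<^sub>R omt t p, 0))) (at t)"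
  by (auto intro!: derivative_eq_intros om_deriv_t simp: fun_eq_iff)

lemma path_p: "((\<lambda>p. (x + s *\<^sub>R om t p, \<tau>)) has_derivative (\<lambda>h. h *\<^sub>R (s *\<^sub>R (sin t *\<^sub>R eph p), 0))) (at p)"
  by (auto intro!: derivative_eq_intros om_deriv_p simp: fun_eq_iff)

lemma chain_inner:
  fixes R :: "real \<Rightarrow> (real^'n) \<times> real"
  assumes "(R has_derivative (\<lambda>h. h *\<^sub>R (v', c))) (at t0)"
    and "(F has_derivative (\<lambda>(h,\<tau>). L h + \<tau> *\<^sub>R w)) (at (R t0))" and "linear L"
  shows "((\<lambda>t. inner (F (R t)) v) has_real_derivative (inner (L v' + c *\<^sub>R w) v)) (at t0)"
proof -
  have "((\<lambda>t. F (R t)) has_derivative (\<lambda>t. (\<lambda>(h,\<tau>). L h + \<tau> *\<^sub>R w) (t *\<^sub>R (v', c)))) (at t0)"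
    by (rule has_derivative_compose[OF assms(1) assms(2)])
  then have "((\<lambda>t. inner (F (R t)) v) has_derivative (\<lambda>t. inner ((\<lambda>(h,\<tau>). L h + \<tau> *\<^sub>R w) (t *\<^sub>R (v', c))) v)) (at t0)"
    by (rule bounded_linear.has_derivative[OF bounded_linear_inner_left])
  moreover have "(\<lambda>t. inner ((\<lambda>(h,\<tau>). L h + \<tau> *\<^sub>R w) (t *\<^sub>R (v', c))) v) = (\<lambda>t. (inner (L v' + c *\<^sub>R w) v) * t)"
    using assms(3) by (auto simp: fun_eq_iff algebra_simps linear_scale inner_add_left)
  ultimately show ?thesis by (simp add: has_field_derivative_def)
qed

locale wdata =
  fixes u :: "(real^3) \<times> real \<Rightarrow> real"
    and Gx Gxt Utx :: "(real^3) \<times> real \<Rightarrow> real^3"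
    and Ut Utt :: "(real^3) \<times> real \<Rightarrow> real"
    and Hx :: "(real^3) \<times> real \<Rightarrow> real^3 \<Rightarrow> real^3"
  assumes du: "\<And>p. p \<in> UNIV \<times> {0..} \<Longrightarrow> (u has_derivative (\<lambda>(h,\<tau>). inner (Gx p) h + \<tau> * Ut p)) (at p within UNIV \<times> {0..})"
    and dG: "\<And>p. p \<in> UNIV \<times> {0..} \<Longrightarrow> (Gx has_derivative (\<lambda>(h,\<tau>). Hx p h + \<tau> *\<^sub>R Gxt p)) (at p within UNIV \<times> {0..})"
    and dU: "\<And>p. p \<in> UNIV \<times> {0..} \<Longrightarrow> (Ut has_derivative (\<lambda>(h,\<tau>). inner (Utx p) h + \<tau> * Utt p)) (at p within UNIV \<times> {0..})"
    and lin: "\<And>p. linear (Hx p)"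
    and cu: "continuous_on (UNIV \<times> {0..}) u"
    and cG: "continuous_on (UNIV \<times> {0..}) Gx"
    and cU: "continuous_on (UNIV \<times> {0..}) Ut"
    and cGt: "continuous_on (UNIV \<times> {0..}) Gxt"
    and cUx: "continuous_on (UNIV \<times> {0..}) Utx"
    and cUtt: "continuous_on (UNIV \<times> {0..}) Utt"
    and cH: "\<And>v. continuous_on (UNIV \<times> {0..}) (\<lambda>p. Hx p v)"
    and wave: "\<And>p. p \<in> UNIV \<times> {0..} \<Longrightarrow> Utt p = (\<Sum>b\<in>Basis. inner (Hx p b) b)"
begin

lemma du_at: "snd p > 0 \<Longrightarrow> (u has_derivative (\<lambda>(h,\<tau>). inner (Gx p) h + \<tau> * Ut p)) (at p)"
  by (rule within_to_at) (auto intro!: du simp: mem_Times_iff less_imp_le)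
lemma dG_at: "snd p > 0 \<Longrightarrow> (Gx has_derivative (\<lambda>(h,\<tau>). Hx p h + \<tau> *\<^sub>R Gxt p)) (at p)"
  by (rule within_to_at) (auto intro!: dG simp: mem_Times_iff less_imp_le)
lemma dU_at: "snd p > 0 \<Longrightarrow> (Ut has_derivative (\<lambda>(h,\<tau>). inner (Utx p) h + \<tau> * Utt p)) (at p)"
  by (rule within_to_at) (auto intro!: dU simp: mem_Times_iff less_imp_le)

lemma cont_comp:
  assumes "continuous_on (UNIV \<times> {0..}) F" "continuous_on D P" "\<And>z. z \<in> D \<Longrightarrow> snd (P z) \<ge> 0"
  shows "continuous_on D (\<lambda>z. F (P z))"
proof -
  have "P ` D \<subseteq> UNIV \<times> {0..}" using assms(3) by (auto simp: image_subset_iff mem_Times_iff)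
  then show ?thesis by (rule continuous_on_compose2[OF assms(1) assms(2)])
qed

lemma cont_H:
  assumes "continuous_on D P" "\<And>z. z \<in> D \<Longrightarrow> snd (P z) \<ge> 0" "continuous_on D V"
  shows "continuous_on D (\<lambda>z. Hx (P z) (V z))"
proof -
  have e: "Hx (P z) (V z) = V z$1 *\<^sub>R Hx (P z) (axis 1 1) + V z$2 *\<^sub>R Hx (P z) (axis 2 1) + V z$3 *\<^sub>R Hx (P z) (axis 3 1)" for z
    by (rule linear_expand3[OF lin])
  show ?thesis unfolding e
    by (intro continuous_intros cont_comp[OF cH] assms)
qed

lemma sym: assumes "snd p > 0" shows "Utx p = Gxt p"
proof -
  obtain y \<tau> where p: "p = (y,\<tau>)" by (cases p)
  have \<tau>: "\<tau> > 0" using assms p by simp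
  have key: "inner (Gxt p) v = inner (Utx p) v" for v
  proof -
    define q where "q = (\<lambda>a b. (y + a *\<^sub>R v, \<tau> + b))"
    define G :: "(real \<times> real) set" where "G = UNIV \<times> {-\<tau><..}"
    have qpos: "(a,b) \<in> G \<Longrightarrow> snd (q a b) > 0" for a b by (auto simp: q_def G_def)
    have pa: "((\<lambda>a. q a b) has_derivative (\<lambda>h. h *\<^sub>R (v, 0))) (at a)" for a b
      unfolding q_def by (auto intro!: derivative_eq_intros simp: fun_eq_iff)
    have pb: "((\<lambda>b. q a b) has_derivative (\<lambda>h. h *\<^sub>R (0, 1))) (at b)" for a b
      unfolding q_def by (auto intro!: derivative_eq_intros simp: fun_eq_iff)
    have cq: "continuous_on G (\<lambda>z. q (fst z) (snd z))" unfolding q_def by (intro continuous_intros)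
    have qnn: "z \<in> G \<Longrightarrow> snd (q (fst z) (snd z)) \<ge> 0" for z using qpos[of "fst z" "snd z"] by simp
    have h1: "((\<lambda>a. u (q a b)) has_real_derivative inner (Gx (q a b)) v) (at a)" if ab: "(a,b) \<in> G" for a b
        using chain_scalar[OF pa du_at[OF qpos[OF ab]]] by simp
    have h2: "((\<lambda>b. u (q a b)) has_real_derivative Ut (q a b)) (at b)" if ab: "(a,b) \<in> G" for a b
        using chain_scalar[OF pb du_at[OF qpos[OF ab]]] by simp
    have h3: "((\<lambda>b. inner (Gx (q a b)) v) has_real_derivative inner (Gxt (q a b)) v) (at b)" if ab: "(a,b) \<in> G" for a b
        using chain_inner[OF pb dG_at[OF qpos[OF ab]] lin] by (simp add: linear_0[OF lin])
    have h4: "((\<lambda>a. Ut (q a b)) has_real_derivative inner (Utx (q a b)) v) (at a)" if ab: "(a,b) \<in> G" for a b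
        using chain_scalar[OF pa dU_at[OF qpos[OF ab]]] by simp
    have c1: "continuous_on G (\<lambda>(a,b). inner (Gxt (q a b)) v)"
        unfolding case_prod_beta' by (intro continuous_intros cont_comp[OF cGt cq qnn]) 
    have c2: "continuous_on G (\<lambda>(a,b). inner (Utx (q a b)) v)"
        unfolding case_prod_beta' by (intro continuous_intros cont_comp[OF cUx cq qnn])
    have oG: "open G" by (simp add: G_def open_Times)
    have zG: "(0,0) \<in> G" using \<tau> by (simp add: G_def)
    have "inner (Gxt (q 0 0)) v = inner (Utx (q 0 0)) v"
      by (rule clairaut[where a = "\<lambda>a b. u (q a b)", OF oG zG h1 h2 h3 h4 c1 c2])
    then show ?thesis by (simp add: q_def p)
  qed
  have "inner (Utx p - Gxt p) (Utx p - Gxt p) = 0"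
    using key[of "Utx p - Gxt p"] by (simp only: inner_diff_left)
  then show ?thesis by simp
qed

end

context wdata begin

lemma kderiv:
  assumes "0 < s" "s < T"
  shows "((\<lambda>s. s * Ut (x + s *\<^sub>R w, T - s) + u (x + s *\<^sub>R w, T - s) + s * inner (Gx (x + s *\<^sub>R w, T - s)) w)
     has_real_derivative
     (2 * inner (Gx (x + s *\<^sub>R w, T - s)) w + s * (inner (Hx (x + s *\<^sub>R w, T - s) w) w
        - (\<Sum>b\<in>Basis. inner (Hx (x + s *\<^sub>R w, T - s) b) b)))) (at s)"
proof -
  define p where "p = (x + s *\<^sub>R w, T - s)"
  have pp: "snd p > 0" using assms by (simp add: p_def)
  have d1: "((\<lambda>s. Ut (x + s *\<^sub>R w, T - s)) has_real_derivative inner (Utx p) w + (-1) * Utt p) (at s)"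
    using chain_scalar[OF path_s[of x w T s] dU_at[OF pp[unfolded p_def]]] by (simp add: p_def)
  have d2: "((\<lambda>s. u (x + s *\<^sub>R w, T - s)) has_real_derivative inner (Gx p) w + (-1) * Ut p) (at s)"
    using chain_scalar[OF path_s[of x w T s] du_at[OF pp[unfolded p_def]]] by (simp add: p_def)
  have d3: "((\<lambda>s. inner (Gx (x + s *\<^sub>R w, T - s)) w) has_real_derivative inner (Hx p w + (-1) *\<^sub>R Gxt p) w) (at s)"
    using chain_inner[OF path_s[of x w T s] dG_at[OF pp[unfolded p_def]] lin] by (simp add: p_def)
  have D: "((\<lambda>s. s * Ut (x + s *\<^sub>R w, T - s) + u (x + s *\<^sub>R w, T - s) + s * inner (Gx (x + s *\<^sub>R w, T - s)) w)
     has_real_derivative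
     (s * (inner (Utx p) w + (-1) * Utt p) + 1 * Ut p) + (inner (Gx p) w + (-1) * Ut p)
      + (s * inner (Hx p w + (-1) *\<^sub>R Gxt p) w + 1 * inner (Gx p) w)) (at s)"
    unfolding p_def by (intro DERIV_add DERIV_mult' DERIV_ident d1[unfolded p_def] d2[unfolded p_def] d3[unfolded p_def])
  have "Utx p = Gxt p" by (rule sym[OF pp])
  moreover have "Utt p = (\<Sum>b\<in>Basis. inner (Hx p b) b)" by (rule wave) (use pp in \<open>auto simp: mem_Times_iff\<close>)
  ultimately have "(s * (inner (Utx p) w + (-1) * Utt p) + 1 * Ut p) + (inner (Gx p) w + (-1) * Ut p)
      + (s * inner (Hx p w + (-1) *\<^sub>R Gxt p) w + 1 * inner (Gx p) w)
     = 2 * inner (Gx p) w + s * (inner (Hx p w) w - (\<Sum>b\<in>Basis. inner (Hx p b) b))"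
    by (simp add: inner_add_left algebra_simps)
  with D show ?thesis by (simp add: p_def)
qed

end

lemma cont_om: "continuous_on (D::'a::t2_space set) f \<Longrightarrow> continuous_on D g \<Longrightarrow> continuous_on D (\<lambda>z. om (f z) (g z))"
  unfolding om_def vector3_eq by (auto intro!: continuous_intros)
lemma cont_omt: "continuous_on (D::'a::t2_space set) f \<Longrightarrow> continuous_on D g \<Longrightarrow> continuous_on D (\<lambda>z. omt (f z) (g z))"
  unfolding omt_def vector3_eq by (auto intro!: continuous_intros)
lemma cont_eph: "continuous_on (D::'a::t2_space set) g \<Longrightarrow> continuous_on D (\<lambda>z. eph (g z))"
  unfolding eph_def vector3_eq by (auto intro!: continuous_intros)

context wdata begin

lemma darboux:
  assumes s: "s > 0" and \<tau>: "\<tau> > 0"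
  shows "integral {0..pi} (\<lambda>\<theta>. integral {0..2*pi} (\<lambda>\<phi>.
     (2 * inner (Gx (x + s *\<^sub>R om \<theta> \<phi>, \<tau>)) (om \<theta> \<phi>) + s * (inner (Hx (x + s *\<^sub>R om \<theta> \<phi>, \<tau>) (om \<theta> \<phi>)) (om \<theta> \<phi>)
       - (\<Sum>b\<in>Basis. inner (Hx (x + s *\<^sub>R om \<theta> \<phi>, \<tau>) b) b))) * sin \<theta>)) = 0"
proof -
  define Q where "Q = (\<lambda>\<theta> \<phi>. (x + s *\<^sub>R om \<theta> \<phi>, \<tau>))"
  have Qp: "snd (Q t p) > 0" for t p using \<tau> by (simp add: Q_def)
  have gt: "((\<lambda>t. Gx (Q t p) $ i) has_real_derivative s * (Hx (Q t p) (omt t p)) $ i) (at t)" for i t p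
    using chain_vec[OF path_t[of x s p \<tau> t] dG_at[OF Qp[unfolded Q_def]] lin, of i]
    by (simp add: Q_def linear_scale[OF lin])
  have gp: "((\<lambda>p. Gx (Q t p) $ i) has_real_derivative s * sin t * (Hx (Q t p) (eph p)) $ i) (at p)" for i t p
    using chain_vec[OF path_p[of x s t \<tau> p] dG_at[OF Qp[unfolded Q_def]] lin, of i]
    by (simp add: Q_def linear_scale[OF lin])
  define A where "A = (\<lambda>t p. s * sin t * (cos t * cos p * Gx (Q t p) $ 1 + cos t * sin p * Gx (Q t p) $ 2 - sin t * Gx (Q t p) $ 3))"
  define B where "B = (\<lambda>t p. s * (- sin p * Gx (Q t p) $ 1 + cos p * Gx (Q t p) $ 2))"
  define hor where "hor = (\<lambda>p. vector [cos p, sin p, 0] :: real^3)"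
  define Ath where "Ath = (\<lambda>t p. s * cos t * inner (Gx (Q t p)) (omt t p)
      + s * sin t * (s * inner (Hx (Q t p) (omt t p)) (omt t p) - inner (Gx (Q t p)) (om t p)))"
  define Bph where "Bph = (\<lambda>t p. s * (s * sin t * inner (Hx (Q t p) (eph p)) (eph p) - inner (Gx (Q t p)) (hor p)))"
  define K where "K = (\<lambda>t p. 2 * inner (Gx (Q t p)) (om t p) + s * (inner (Hx (Q t p) (om t p)) (om t p)
       - (\<Sum>b\<in>Basis. inner (Hx (Q t p) b) b)))"
  have At: "((\<lambda>t. A t p) has_real_derivative Ath t p) (at t)" for t p
    unfolding A_def
    by (auto intro!: derivative_eq_intros gt
        simp: Ath_def inner_vector3' omt_def om_def algebra_simps)
  have Bp: "((\<lambda>p. B t p) has_real_derivative Bph t p) (at p)" for t p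
    unfolding B_def
    by (auto intro!: derivative_eq_intros gp
        simp: Bph_def inner_vector3' eph_def hor_def algebra_simps)
  have ident: "Ath t p + Bph t p = - s * sin t * K t p" for t p
  proof -
    have s1: "sin t ^ 2 + cos t ^ 2 = 1" "sin p ^ 2 + cos p ^ 2 = 1" by simp_all
    have fr: "inner (Hx (Q t p) (om t p)) (om t p) + inner (Hx (Q t p) (omt t p)) (omt t p)
        + inner (Hx (Q t p) (eph p)) (eph p) = (\<Sum>b\<in>Basis. inner (Hx (Q t p) b) b)"
      by (rule frame3[OF lin])
    have vec: "cos t * inner (Gx (Q t p)) (omt t p) - sin t * inner (Gx (Q t p)) (om t p)
        - inner (Gx (Q t p)) (hor p) = - 2 * sin t * inner (Gx (Q t p)) (om t p)"
      unfolding inner_vector3' omt_def om_def hor_def by simp (use s1 in algebra)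
    have "Ath t p + Bph t p = s * (cos t * inner (Gx (Q t p)) (omt t p) - sin t * inner (Gx (Q t p)) (om t p)
        - inner (Gx (Q t p)) (hor p)) + s * s * sin t * (inner (Hx (Q t p) (omt t p)) (omt t p)
        + inner (Hx (Q t p) (eph p)) (eph p))"
      by (simp add: Ath_def Bph_def algebra_simps)
    also have "\<dots> = - s * sin t * K t p"
      unfolding vec K_def fr[symmetric] by (simp add: algebra_simps)
    finally show ?thesis .
  qed
  have cQ: "continuous_on D (\<lambda>z. Q (fst z) (snd z))" for D :: "(real\<times>real) set"
    unfolding Q_def by (intro continuous_intros cont_om)
  have Qnn: "snd (Q (fst z) (snd z)) \<ge> 0" for z using Qp[of "fst z" "snd z"] by simp
  have cAth: "continuous_on D (\<lambda>z. Ath (fst z) (snd z))" for D :: "(real\<times>real) set"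
    unfolding Ath_def
    by (intro continuous_intros cont_comp[OF cG cQ] cont_H[OF cQ] cont_omt cont_om Qnn)
  have cBph: "continuous_on D (\<lambda>z. Bph (fst z) (snd z))" for D :: "(real\<times>real) set"
    unfolding Bph_def hor_def vector3_eq
    by (intro continuous_intros cont_comp[OF cG cQ] cont_H[OF cQ] cont_eph Qnn)
  have cA1: "continuous_on X (\<lambda>p. Ath t p)" for t X
  proof -
    have "continuous_on X (\<lambda>p. (t,p))" by (intro continuous_intros)
    then show ?thesis using continuous_on_compose2[OF cAth[of UNIV], of X "\<lambda>p. (t,p)"] by simp
  qed
  have cB1: "continuous_on X (\<lambda>p. Bph t p)" for t X
  proof -
    have "continuous_on X (\<lambda>p. (t,p))" by (intro continuous_intros)
    then show ?thesis using continuous_on_compose2[OF cBph[of UNIV], of X "\<lambda>p. (t,p)"] by simp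
  qed
  have Bzero: "integral {0..2*pi} (\<lambda>p. Bph t p) = 0" for t
  proof -
    have "integral {0..2*pi} (\<lambda>p. Bph t p) = B t (2*pi) - B t 0"
      by (rule ftc_at) (auto intro: Bp)
    also have "\<dots> = 0" by (simp add: B_def Q_def om_def)
    finally show ?thesis .
  qed
  have inner_eq: "integral {0..2*pi} (\<lambda>p. K t p * sin t) = -(1/s) * integral {0..2*pi} (\<lambda>p. Ath t p)" for t
  proof -
    have "integral {0..2*pi} (\<lambda>p. K t p * sin t) = integral {0..2*pi} (\<lambda>p. -(1/s) * (Ath t p + Bph t p))"
      by (rule integral_cong) (use ident s in \<open>simp add: field_simps\<close>)
    also have "\<dots> = -(1/s) * (integral {0..2*pi} (\<lambda>p. Ath t p) + integral {0..2*pi} (\<lambda>p. Bph t p))"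
      by (simp add: integral_add integrable_continuous_real cA1 cB1)
    finally show ?thesis using Bzero by simp
  qed
  have swap: "integral {0..pi} (\<lambda>t. integral {0..2*pi} (\<lambda>p. Ath t p))
      = integral {0..2*pi} (\<lambda>p. integral {0..pi} (\<lambda>t. Ath t p))"
    using integral_swap_continuous[of 0 0 pi "2*pi" Ath] cAth[of "cbox (0,0) (pi,2*pi)"]
    by (simp add: case_prod_beta')
  have Azero: "integral {0..pi} (\<lambda>t. Ath t p) = 0" for p
  proof -
    have "integral {0..pi} (\<lambda>t. Ath t p) = A pi p - A 0 p"
      by (rule ftc_at) (auto intro: At)
    also have "\<dots> = 0" by (simp add: A_def)
    finally show ?thesis .
  qed
  have "integral {0..pi} (\<lambda>t. integral {0..2*pi} (\<lambda>p. K t p * sin t))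
      = integral {0..pi} (\<lambda>t. -(1/s) * integral {0..2*pi} (\<lambda>p. Ath t p))"
    by (rule integral_cong) (rule inner_eq)
  also have "\<dots> = -(1/s) * integral {0..pi} (\<lambda>t. integral {0..2*pi} (\<lambda>p. Ath t p))"
    by (rule integral_mult_right)
  also have "\<dots> = 0" unfolding swap Azero by simp
  finally show ?thesis by (simp add: K_def Q_def)
qed

end

lemma sphere_int3_om: "sphere_int3 h = integral {0..pi} (\<lambda>t. integral {0..2*pi} (\<lambda>p. h (om t p) * sin t))"
  by (simp add: sphere_int3_def om_def)

lemma box_split:
  fixes F :: "real \<times> real \<Rightarrow> real"
  assumes "continuous_on (cbox (0,0) (pi,2*pi)) F"
  shows "integral (cbox (0,0) (pi,2*pi)) F = integral {0..pi} (\<lambda>t. integral {0..2*pi} (\<lambda>p. F (t,p)))"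
  using integral_prod_continuous[of 0 0 pi "2*pi" F] assms by (simp add: cbox_interval)

lemma sphere_box:
  assumes "continuous_on UNIV h"
  shows "sphere_int3 h = integral (cbox (0,0) (pi,2*pi)) (\<lambda>z. h (om (fst z) (snd z)) * sin (fst z))"
proof -
  have "continuous_on (cbox (0,0) (pi,2*pi)) (\<lambda>z. h (om (fst z) (snd z)) * sin (fst z))"
    by (intro continuous_intros continuous_on_compose2[OF assms] cont_om) auto
  then show ?thesis unfolding sphere_int3_om by (subst box_split) auto
qed

lemma sphere_const: "sphere_int3 (\<lambda>w. c) = 4 * pi * c"
proof -
  have "integral {0..pi} sin = (- cos pi) - (- cos 0)"
    by (rule ftc_at) (auto intro!: derivative_eq_intros)
  then have "integral {0..pi} sin = 2" by simp
  then show ?thesis unfolding sphere_int3_def by simp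
qed

context wdata begin

lemma kirchhoff:
  assumes T: "T > 0"
  shows "4 * pi * u (x, T) = sphere_int3 (\<lambda>w. T * Ut (x + T *\<^sub>R w, 0) + u (x + T *\<^sub>R w, 0)
           + T * inner (Gx (x + T *\<^sub>R w, 0)) w)"
proof -
  define P where "P = (\<lambda>s w. (x + s *\<^sub>R w, T - s))"
  define kf where "kf = (\<lambda>s w. s * Ut (P s w) + u (P s w) + s * inner (Gx (P s w)) w)"
  define Kf where "Kf = (\<lambda>s w. 2 * inner (Gx (P s w)) w + s * (inner (Hx (P s w) w) w
        - (\<Sum>b\<in>Basis. inner (Hx (P s w) b) b)))"
  define box :: "(real\<times>real) set" where "box = cbox (0,0) (pi,2*pi)"
  have ckf: "continuous_on UNIV (kf s)" if "s \<le> T" for s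
  proof -
    have cP: "continuous_on UNIV (P s)" unfolding P_def by (intro continuous_intros)
    have Pn: "snd (P s w) \<ge> 0" for w using that by (simp add: P_def)
    show ?thesis unfolding kf_def
      by (intro continuous_intros cont_comp[OF cU cP] cont_comp[OF cu cP] cont_comp[OF cG cP] Pn)
  qed
  have ftc: "kf T w - kf 0 w = integral {0..T} (\<lambda>s. Kf s w)" for w
  proof -
    have "((\<lambda>s. Kf s w) has_integral (kf T w - kf 0 w)) {0..T}"
    proof (rule fundamental_theorem_of_calculus_interior)
      show "0 \<le> T" using T by simp
      have cP: "continuous_on {0..T} (\<lambda>s. P s w)" unfolding P_def by (intro continuous_intros)
      have Pn: "s \<in> {0..T} \<Longrightarrow> snd (P s w) \<ge> 0" for s by (simp add: P_def)
      show "continuous_on {0..T} (\<lambda>s. kf s w)" unfolding kf_def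
        by (intro continuous_intros cont_comp[OF cU cP] cont_comp[OF cu cP] cont_comp[OF cG cP] Pn)
      fix s assume "s \<in> {0<..<T}"
      then show "((\<lambda>s. kf s w) has_vector_derivative Kf s w) (at s)"
        using kderiv[of s T x w]
        by (simp add: kf_def Kf_def P_def has_real_derivative_iff_has_vector_derivative)
    qed
    then show ?thesis by (simp add: integral_unique)
  qed
  define D :: "((real\<times>real)\<times>real) set" where "D = cbox ((0,0),0) ((pi,2*pi),T)"
  have cF: "continuous_on D (\<lambda>(z,s). Kf s (om (fst z) (snd z)) * sin (fst z))"
  proof -
    have cP: "continuous_on D (\<lambda>y. P (snd y) (om (fst (fst y)) (snd (fst y))))"
      unfolding P_def by (intro continuous_intros cont_om)
    have Pn: "y \<in> D \<Longrightarrow> snd (P (snd y) (om (fst (fst y)) (snd (fst y)))) \<ge> 0" for y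
      by (cases y) (auto simp: P_def D_def cbox_Pair_eq)
    show ?thesis unfolding Kf_def case_prod_beta'
      by (intro continuous_intros cont_comp[OF cG cP] cont_H[OF cP] cont_om Pn)
  qed
  have zero: "integral box (\<lambda>z. Kf s (om (fst z) (snd z)) * sin (fst z)) = 0" if s: "s \<in> {0<..<T}" for s
  proof -
    have "continuous_on box (\<lambda>z. Kf s (om (fst z) (snd z)) * sin (fst z))"
    proof -
      have "continuous_on box (\<lambda>z. (z, s))" by (intro continuous_intros)
      moreover have "(\<lambda>z. (z, s)) ` box \<subseteq> D" using s by (auto simp: box_def D_def cbox_Pair_eq)
      ultimately have "continuous_on box (\<lambda>y. (\<lambda>(z,s). Kf s (om (fst z) (snd z)) * sin (fst z)) (y, s))"
        by (rule continuous_on_compose2[OF cF])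
      then show ?thesis by simp
    qed
    then have "integral box (\<lambda>z. Kf s (om (fst z) (snd z)) * sin (fst z))
       = integral {0..pi} (\<lambda>t. integral {0..2*pi} (\<lambda>p. Kf s (om t p) * sin t))"
      unfolding box_def by (subst box_split) auto
    also have "\<dots> = 0"
      using darboux[of s "T - s" x] s by (simp add: Kf_def P_def)
    finally show ?thesis .
  qed
  have "sphere_int3 (kf T) - sphere_int3 (kf 0)
      = integral box (\<lambda>z. kf T (om (fst z) (snd z)) * sin (fst z)) - integral box (\<lambda>z. kf 0 (om (fst z) (snd z)) * sin (fst z))"
    unfolding box_def using ckf T by (simp add: sphere_box)
  also have "\<dots> = integral box (\<lambda>z. (kf T (om (fst z) (snd z)) - kf 0 (om (fst z) (snd z))) * sin (fst z))"
  proof -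
    have cko: "continuous_on box (\<lambda>z. kf s (om (fst z) (snd z)) * sin (fst z))" if "s \<le> T" for s
    proof -
      have "continuous_on box (\<lambda>z. om (fst z) (snd z))" by (intro cont_om continuous_intros)
      then have "continuous_on box (\<lambda>z. kf s (om (fst z) (snd z)))"
        using continuous_on_compose2[OF ckf[OF that] _ subset_UNIV] by blast
      then show ?thesis by (intro continuous_intros)
    qed
    have i: "(\<lambda>z. kf s (om (fst z) (snd z)) * sin (fst z)) integrable_on box" if "s \<le> T" for s
      unfolding box_def by (rule integrable_continuous) (use cko[OF that] in \<open>simp add: box_def\<close>)
    show ?thesis
      by (subst integral_diff[symmetric, OF i i]) (use T in \<open>simp_all add: left_diff_distrib\<close>)
  qed
  also have "\<dots> = integral box (\<lambda>z. integral {0..T} (\<lambda>s. Kf s (om (fst z) (snd z)) * sin (fst z)))"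
    by (rule integral_cong) (simp add: ftc)
  also have "\<dots> = integral {0..T} (\<lambda>s. integral box (\<lambda>z. Kf s (om (fst z) (snd z)) * sin (fst z)))"
    using integral_swap_continuous[of "(0,0)" 0 "(pi,2*pi)" T "\<lambda>z s. Kf s (om (fst z) (snd z)) * sin (fst z)"] cF
    by (simp add: box_def D_def cbox_interval)
  also have "\<dots> = integral {0<..<T} (\<lambda>s. integral box (\<lambda>z. Kf s (om (fst z) (snd z)) * sin (fst z)))"
    by (rule integral_open_interval_real)
  also have "\<dots> = integral {0<..<T} (\<lambda>s. 0)"
    by (rule integral_cong) (rule zero)
  finally have "sphere_int3 (kf T) - sphere_int3 (kf 0) = 0" by simp
  moreover have "kf 0 = (\<lambda>w. u (x, T))" by (simp add: kf_def P_def fun_eq_iff)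
  moreover have "kf T = (\<lambda>w. T * Ut (x + T *\<^sub>R w, 0) + u (x + T *\<^sub>R w, 0) + T * inner (Gx (x + T *\<^sub>R w, 0)) w)"
    by (simp add: kf_def P_def fun_eq_iff)
  ultimately show ?thesis by (simp add: sphere_const)
qed

end

abbreviation HS :: "('n::euclidean_space \<times> real) set" where "HS \<equiv> UNIV \<times> {0..}"

locale wgen =
  fixes u :: "('n::euclidean_space) \<times> real \<Rightarrow> real"
    and Gx Gxt Utx :: "'n \<times> real \<Rightarrow> 'n"
    and Ut Utt :: "'n \<times> real \<Rightarrow> real"
    and Hx :: "'n \<times> real \<Rightarrow> 'n \<Rightarrow> 'n"
  assumes du: "\<And>p. p \<in> UNIV \<times> {0..} \<Longrightarrow> (u has_derivative (\<lambda>(h,\<tau>). inner (Gx p) h + \<tau> * Ut p)) (at p within UNIV \<times> {0..})"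
    and dG: "\<And>p. p \<in> UNIV \<times> {0..} \<Longrightarrow> (Gx has_derivative (\<lambda>(h,\<tau>). Hx p h + \<tau> *\<^sub>R Gxt p)) (at p within UNIV \<times> {0..})"
    and dU: "\<And>p. p \<in> UNIV \<times> {0..} \<Longrightarrow> (Ut has_derivative (\<lambda>(h,\<tau>). inner (Utx p) h + \<tau> * Utt p)) (at p within UNIV \<times> {0..})"
    and lin: "\<And>p. linear (Hx p)"
    and cu: "continuous_on (UNIV \<times> {0..}) u"
    and cG: "continuous_on (UNIV \<times> {0..}) Gx"
    and cU: "continuous_on (UNIV \<times> {0..}) Ut"
    and cGt: "continuous_on (UNIV \<times> {0..}) Gxt"
    and cUx: "continuous_on (UNIV \<times> {0..}) Utx"
    and cUtt: "continuous_on (UNIV \<times> {0..}) Utt"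
    and cH: "\<And>v. continuous_on (UNIV \<times> {0..}) (\<lambda>p. Hx p v)"
    and wave: "\<And>p. p \<in> UNIV \<times> {0..} \<Longrightarrow> Utt p = (\<Sum>b\<in>Basis. inner (Hx p b) b)"

lemma wgen_wdata:
  fixes u :: "(real^3) \<times> real \<Rightarrow> real"
  shows "wgen u Gx Gxt Utx Ut Utt Hx \<Longrightarrow> wdata u Gx Gxt Utx Ut Utt Hx"
  unfolding wgen_def wdata_def by blast

lemma lin_split:
  fixes L :: "'n::euclidean_space \<times> real \<Rightarrow> 'b::real_vector"
  assumes "linear L"
  shows "L (h,\<tau>) = L (h,0) + \<tau> *\<^sub>R L (0,1)"
proof -
  have "L (h,\<tau>) = L ((h,0) + \<tau> *\<^sub>R (0,1))" by simp
  also have "\<dots> = L (h,0) + \<tau> *\<^sub>R L (0,1)" by (simp only: linear_add[OF assms] linear_scale[OF assms])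
  finally show ?thesis .
qed

lemma lin_fst:
  fixes L :: "'n::euclidean_space \<times> real \<Rightarrow> 'b::real_vector"
  assumes "linear L"
  shows "L (h,0) = (\<Sum>i\<in>Basis. inner h i *\<^sub>R L (i,0))"
proof -
  have "(h,0::real) = (\<Sum>i\<in>Basis. inner h i *\<^sub>R (i,0::real))"
    by (simp add: prod_eq_iff fst_sum snd_sum euclidean_representation)
  then have "L (h,0) = L (\<Sum>i\<in>Basis. inner h i *\<^sub>R (i,0::real))" by simp
  also have "\<dots> = (\<Sum>i\<in>Basis. inner h i *\<^sub>R L (i,0))"
    by (simp only: linear_sum[OF assms] linear_scale[OF assms])
  finally show ?thesis .
qed

lemma lin_decomp:
  fixes L :: "'n::euclidean_space \<times> real \<Rightarrow> real"
  assumes "linear L"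
  shows "L (h,\<tau>) = inner (\<Sum>i\<in>Basis. L (i,0) *\<^sub>R i) h + \<tau> * L (0,1)"
  unfolding lin_split[OF assms, of h \<tau>] lin_fst[OF assms, of h]
  by (simp add: inner_sum_right inner_commute mult.commute)

lemma lin_fst_add:
  fixes L :: "'n::euclidean_space \<times> real \<Rightarrow> 'b::real_vector"
  assumes "linear L"
  shows "L (x + y, 0) = L (x,0) + L (y,0)" "L (c *\<^sub>R x, 0) = c *\<^sub>R L (x,0)"
proof -
  have "L (x + y, 0) = L ((x,0) + (y,0))" by simp
  then show "L (x + y, 0) = L (x,0) + L (y,0)" by (simp only: linear_add[OF assms])
  have "L (c *\<^sub>R x, 0) = L (c *\<^sub>R (x,0))" by simp
  then show "L (c *\<^sub>R x, 0) = c *\<^sub>R L (x,0)" by (simp only: linear_scale[OF assms])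
qed

lemma Basis_i0: "i \<in> Basis \<Longrightarrow> ((i,0) :: 'a::euclidean_space \<times> 'b::euclidean_space) \<in> Basis"
  by (simp add: Basis_prod_def)
lemma Basis_01: "((0,1) :: 'a::euclidean_space \<times> real) \<in> Basis"
  by (simp add: Basis_prod_def)

lemma wave_sol_wgen:
  fixes u :: "('n::euclidean_space) \<times> real \<Rightarrow> real"
  assumes W: "wave_sol u f g"
  shows "\<exists>Gx Gxt Utx Ut Utt Hx. wgen u Gx Gxt Utx Ut Utt Hx \<and>
     (\<forall>y. u (y,0) = f y \<and> Ut (y,0) = g y \<and> Gx (y,0) = grad f y)"
proof -
  have C2: "cont_diff 2 u HS" and wv: "\<And>p. p \<in> HS \<Longrightarrow>
        pdiff HS (pdiff HS u (0, 1)) (0, 1) p = (\<Sum>i\<in>Basis. pdiff HS (pdiff HS u (i, 0)) (i, 0) p)"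
    and bd: "\<And>x. u (x, 0) = f x" "\<And>x. pdiff HS u (0, 1) (x, 0) = g x"
    using W unfolding wave_sol_def by auto
  have cu: "continuous_on HS u" and du0: "\<And>p. p \<in> HS \<Longrightarrow> u differentiable (at p within HS)"
    and c1: "\<And>b. b \<in> Basis \<Longrightarrow> continuous_on HS (pdiff HS u b)"
    and d1: "\<And>b p. b \<in> Basis \<Longrightarrow> p \<in> HS \<Longrightarrow> pdiff HS u b differentiable (at p within HS)"
    and c2: "\<And>b c. b \<in> Basis \<Longrightarrow> c \<in> Basis \<Longrightarrow> continuous_on HS (pdiff HS (pdiff HS u b) c)"
    using C2 by (auto simp: numeral_2_eq_2)
  define Du where "Du = (\<lambda>p. frechet_derivative u (at p within HS))"
  define D where "D = (\<lambda>b p. frechet_derivative (pdiff HS u b) (at p within HS))"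
  have pd1: "pdiff HS u b p = Du p b" for b p by (simp add: pdiff_def Du_def)
  have pd2: "pdiff HS (pdiff HS u b) c p = D b p c" for b c p by (simp add: pdiff_def D_def)
  have hDu: "(u has_derivative Du p) (at p within HS)" if "p \<in> HS" for p
    using du0[OF that] by (simp add: Du_def frechet_derivative_works)
  have hD: "(pdiff HS u b has_derivative D b p) (at p within HS)" if "b \<in> Basis" "p \<in> HS" for b p
    using d1[OF that] by (simp add: D_def frechet_derivative_works)
  define Gx where "Gx = (\<lambda>p. \<Sum>i\<in>Basis. pdiff HS u (i,0) p *\<^sub>R i)"
  define Ut where "Ut = pdiff HS u (0,1)"
  define Hx0 where "Hx0 = (\<lambda>p h. \<Sum>i\<in>Basis. D (i,0) p (h,0) *\<^sub>R i)"
  define Hx where "Hx = (\<lambda>p. if p \<in> HS then Hx0 p else (\<lambda>h. 0))"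
  define Gxt where "Gxt = (\<lambda>p. \<Sum>i\<in>Basis. D (i,0) p (0,1) *\<^sub>R i)"
  define Utx where "Utx = (\<lambda>p. \<Sum>i\<in>Basis. D (0,1) p (i,0) *\<^sub>R i)"
  define Utt where "Utt = (\<lambda>p. D (0,1) p (0,1))"
  have "wgen u Gx Gxt Utx Ut Utt Hx"
  proof (rule wgen.intro)
    fix p :: "'n \<times> real" assume p: "p \<in> HS"
    have lDu: "linear (Du p)" using hDu[OF p] by (rule has_derivative_linear)
    have "(\<lambda>(h,\<tau>). inner (Gx p) h + \<tau> * Ut p) = Du p"
    proof (rule ext, clarify)
      fix h \<tau> show "inner (Gx p) h + \<tau> * Ut p = Du p (h,\<tau>)"
        using lin_decomp[OF lDu, of h \<tau>] by (simp add: Gx_def Ut_def pd1)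
    qed
    then show "(u has_derivative (\<lambda>(h,\<tau>). inner (Gx p) h + \<tau> * Ut p)) (at p within HS)"
      using hDu[OF p] by simp
    have lD: "linear (D b p)" if "b \<in> Basis" for b using hD[OF that p] by (rule has_derivative_linear)
    have "(Gx has_derivative (\<lambda>v. \<Sum>i\<in>Basis. D (i,0) p v *\<^sub>R i)) (at p within HS)"
      unfolding Gx_def
      by (intro has_derivative_sum bounded_linear.has_derivative[OF bounded_linear_scaleR_left] hD p Basis_i0)
    moreover have "(\<lambda>v. \<Sum>i\<in>Basis. D (i,0) p v *\<^sub>R i) = (\<lambda>(h,\<tau>). Hx p h + \<tau> *\<^sub>R Gxt p)"
    proof (rule ext, clarify)
      fix h \<tau>
      have "(\<Sum>i\<in>Basis. D (i,0) p (h,\<tau>) *\<^sub>R i) = (\<Sum>i\<in>Basis. (D (i,0) p (h,0) + \<tau> * D (i,0) p (0,1)) *\<^sub>R i)"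
      proof (rule sum.cong[OF refl])
        fix i :: 'n assume i: "i \<in> Basis"
        show "D (i,0) p (h,\<tau>) *\<^sub>R i = (D (i,0) p (h,0) + \<tau> * D (i,0) p (0,1)) *\<^sub>R i"
          using lin_split[OF lD[OF Basis_i0[OF i]], of h \<tau>] by simp
      qed
      also have "\<dots> = Hx p h + \<tau> *\<^sub>R Gxt p"
        using p by (simp add: Hx_def Hx0_def Gxt_def scaleR_add_left sum.distrib scaleR_sum_right)
      finally show "(\<Sum>i\<in>Basis. D (i,0) p (h,\<tau>) *\<^sub>R i) = Hx p h + \<tau> *\<^sub>R Gxt p" .
    qed
    ultimately show "(Gx has_derivative (\<lambda>(h,\<tau>). Hx p h + \<tau> *\<^sub>R Gxt p)) (at p within HS)" by simp
    have lDt: "linear (D (0,1) p)" by (rule lD[OF Basis_01])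
    have "(\<lambda>(h,\<tau>). inner (Utx p) h + \<tau> * Utt p) = D (0,1) p"
    proof (rule ext, clarify)
      fix h \<tau> show "inner (Utx p) h + \<tau> * Utt p = D (0,1) p (h,\<tau>)"
        using lin_decomp[OF lDt, of h \<tau>] by (simp add: Utx_def Utt_def)
    qed
    then show "(Ut has_derivative (\<lambda>(h,\<tau>). inner (Utx p) h + \<tau> * Utt p)) (at p within HS)"
      using hD[OF Basis_01 p] by (simp add: Ut_def)
    have "Utt p = (\<Sum>i\<in>Basis. D (i,0) p (i,0))"
      using wv[OF p] by (simp add: Utt_def pd2)
    also have "\<dots> = (\<Sum>b\<in>Basis. inner (Hx p b) b)"
      using p by (simp add: Hx_def Hx0_def)
    finally show "Utt p = (\<Sum>b\<in>Basis. inner (Hx p b) b)" .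
  next
    fix p :: "'n \<times> real"
    show "linear (Hx p)"
    proof (cases "p \<in> HS")
      case True
      have lD: "linear (D (i,0) p)" if "i \<in> Basis" for i
        using hD[OF Basis_i0[OF that] True] by (rule has_derivative_linear)
      show ?thesis unfolding Hx_def Hx0_def using True
        by (intro linearI) (simp_all add: lin_fst_add[OF lD] scaleR_add_left sum.distrib scaleR_sum_right)
    next
      case False
      then show ?thesis by (simp add: Hx_def linear_zero)
    qed
  next
    show "continuous_on HS u" by (rule cu)
    show "continuous_on HS Gx" unfolding Gx_def by (intro continuous_intros c1 Basis_i0)
    show "continuous_on HS Ut" unfolding Ut_def by (intro c1 Basis_01)
    show "continuous_on HS Gxt" unfolding Gxt_def pd2[symmetric] by (intro continuous_intros c2 Basis_i0 Basis_01)
    show "continuous_on HS Utx" unfolding Utx_def pd2[symmetric] by (intro continuous_intros c2 Basis_i0 Basis_01)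
    show "continuous_on HS Utt" unfolding Utt_def pd2[symmetric] by (intro continuous_intros c2 Basis_i0 Basis_01)
    fix v
    have "continuous_on HS (\<lambda>p. Hx0 p v)"
    proof -
      have e: "Hx0 p v = (\<Sum>i\<in>Basis. (\<Sum>j\<in>Basis. inner v j * pdiff HS (pdiff HS u (i,0)) (j,0) p) *\<^sub>R i)" if "p \<in> HS" for p
      proof -
        have lD: "linear (D (i,0) p)" if "i \<in> Basis" for i
          using hD[OF Basis_i0[OF that] \<open>p \<in> HS\<close>] by (rule has_derivative_linear)
        show ?thesis unfolding Hx0_def pd2
        proof (rule sum.cong[OF refl])
          fix i :: 'n assume i: "i \<in> Basis"
          show "D (i,0) p (v,0) *\<^sub>R i = (\<Sum>j\<in>Basis. inner v j * D (i,0) p (j,0)) *\<^sub>R i"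
            using lin_fst[OF lD[OF i], of v] by simp
        qed
      qed
      show ?thesis
        by (rule continuous_on_cong[THEN iffD2, OF refl e]) (auto intro!: continuous_intros c2 Basis_i0)
    qed
    then show "continuous_on HS (\<lambda>p. Hx p v)"
      by (rule continuous_on_cong[THEN iffD1, rotated 2]) (auto simp: Hx_def)
  qed
  moreover have "u (y,0) = f y \<and> Ut (y,0) = g y \<and> Gx (y,0) = grad f y" for y
  proof -
    have y: "(y,0) \<in> HS" by simp
    have "((\<lambda>y. u (y,0)) has_derivative (\<lambda>h. Du (y,0) (h,0))) (at y within UNIV)"
    proof (rule has_derivative_in_compose[where f = "\<lambda>y. (y,0)"])
      show "((\<lambda>y. (y,0::real)) has_derivative (\<lambda>h. (h,0))) (at y within UNIV)"
        by (auto intro!: derivative_eq_intros)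
      show "(u has_derivative Du (y,0)) (at (y,0) within (\<lambda>y. (y,0::real)) ` UNIV)"
        by (rule has_derivative_subset[OF hDu[OF y]]) auto
    qed
    moreover have "(\<lambda>y. u (y,0)) = f" using bd(1) by auto
    ultimately have "(\<lambda>h. Du (y,0) (h,0)) = frechet_derivative f (at y)"
      by (intro frechet_derivative_at) simp
    then have "Gx (y,0) = grad f y"
      by (simp add: Gx_def grad_def pd1 fun_eq_iff)
    then show ?thesis using bd by (simp add: Ut_def)
  qed
  ultimately show ?thesis by blast
qed

lemma sphere_scale: "sphere_int3 (\<lambda>w. c * h w) = c * sphere_int3 h"
  unfolding sphere_int3_def by (simp add: mult.assoc)

lemma sphere_mono:
  assumes "continuous_on UNIV h1" "continuous_on UNIV h2" "\<And>w. norm w = 1 \<Longrightarrow> h1 w \<le> h2 w"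
  shows "sphere_int3 h1 \<le> sphere_int3 h2"
proof -
  have c: "continuous_on (cbox (0,0) (pi,2*pi)) (\<lambda>z. h (om (fst z) (snd z)) * sin (fst z))"
    if "continuous_on UNIV h" for h
    by (intro continuous_intros continuous_on_compose2[OF that] cont_om) auto
  show ?thesis
    unfolding sphere_box[OF assms(1)] sphere_box[OF assms(2)]
  proof (rule integral_le)
    show "(\<lambda>z. h1 (om (fst z) (snd z)) * sin (fst z)) integrable_on cbox (0,0) (pi,2*pi)"
      by (rule integrable_continuous[OF c[OF assms(1)]])
    show "(\<lambda>z. h2 (om (fst z) (snd z)) * sin (fst z)) integrable_on cbox (0,0) (pi,2*pi)"
      by (rule integrable_continuous[OF c[OF assms(2)]])
    fix z :: "real \<times> real" assume z: "z \<in> cbox (0,0) (pi,2*pi)"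
    then have "sin (fst z) \<ge> 0" by (cases z) (auto simp: cbox_Pair_eq intro!: sin_ge_zero)
    moreover have "h1 (om (fst z) (snd z)) \<le> h2 (om (fst z) (snd z))" by (rule assms(3)[OF norm_om])
    ultimately show "h1 (om (fst z) (snd z)) * sin (fst z) \<le> h2 (om (fst z) (snd z)) * sin (fst z)"
      by (simp add: mult_right_mono)
  qed
qed

lemma cs_lower: "norm w = 1 \<Longrightarrow> - norm a \<le> inner a w"
  using Cauchy_Schwarz_ineq2[of a w] by (simp add: abs_le_iff)

lemma main3:
  fixes f g :: "real^3 \<Rightarrow> real" and u :: "(real^3) \<times> real \<Rightarrow> real"
  assumes W: "wave_sol u f g"
    and pos: "\<And>x. norm x \<ge> R \<Longrightarrow> f x > 0"
    and t: "t > 0" and xt: "norm x - t \<ge> max R (t - 1)"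
  shows "u (x, t) \<ge> t / (4 * pi) * sphere_int3 (\<lambda>\<omega>.
               f (x + t *\<^sub>R \<omega>) / (1 + norm (x + t *\<^sub>R \<omega>)) - norm (grad f (x + t *\<^sub>R \<omega>))
               + g (x + t *\<^sub>R \<omega>))"
proof -
  obtain Gx Gxt Utx Ut Utt Hx where wg: "wgen u Gx Gxt Utx Ut Utt Hx"
    and bd: "\<And>y. u (y,0) = f y \<and> Ut (y,0) = g y \<and> Gx (y,0) = grad f y"
    using wave_sol_wgen[OF W] by blast
  interpret wdata u Gx Gxt Utx Ut Utt Hx by (rule wgen_wdata[OF wg])
  have cb: "continuous_on UNIV (\<lambda>w::real^3. (x + t *\<^sub>R w, 0::real))" by (intro continuous_intros)
  have cb0: "continuous_on UNIV (\<lambda>y::real^3. (y, 0::real))" by (intro continuous_intros)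
  have sub: "range (\<lambda>w::real^3. (x + t *\<^sub>R w, 0::real)) \<subseteq> UNIV \<times> {0..}" by auto
  have sub0: "range (\<lambda>y::real^3. (y, 0::real)) \<subseteq> UNIV \<times> {0..}" by auto
  have cf: "continuous_on UNIV f"
    using continuous_on_compose2[OF cu cb0 sub0] bd by simp
  have cgr: "continuous_on UNIV (\<lambda>y. grad f y)"
    using continuous_on_compose2[OF cG cb0 sub0] bd by simp
  have cg: "continuous_on UNIV g"
    using continuous_on_compose2[OF cU cb0 sub0] bd by simp
  define \<psi> where "\<psi> = (\<lambda>y. f y / (1 + norm y) - norm (grad f y) + g y)"
  have nz: "\<And>y::real^3. 1 + norm y \<noteq> 0" by (smt (verit) norm_ge_zero)
  have cpsi: "continuous_on UNIV \<psi>" unfolding \<psi>_def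
    by (intro continuous_intros cf cgr cg) (auto simp: nz)
  define K where "K = (\<lambda>w. t * Ut (x + t *\<^sub>R w, 0) + u (x + t *\<^sub>R w, 0) + t * inner (Gx (x + t *\<^sub>R w, 0)) w)"
  have kir: "4 * pi * u (x,t) = sphere_int3 K" unfolding K_def by (rule kirchhoff[OF t])
  have cK: "continuous_on UNIV K"
  proof -
    have "K = (\<lambda>w. t * g (x + t *\<^sub>R w) + f (x + t *\<^sub>R w) + t * inner (grad f (x + t *\<^sub>R w)) w)"
      by (simp add: K_def bd fun_eq_iff)
    then show ?thesis
      by (simp only:) (intro continuous_intros continuous_on_compose2[OF cf] continuous_on_compose2[OF cg]
          continuous_on_compose2[OF cgr]; auto)
  qed
  have cpsi2: "continuous_on UNIV (\<lambda>w. t * \<psi> (x + t *\<^sub>R w))"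
    by (intro continuous_intros continuous_on_compose2[OF cpsi]) auto
  have le: "t * \<psi> (x + t *\<^sub>R w) \<le> K w" if w: "norm w = 1" for w
  proof -
    define y where "y = x + t *\<^sub>R w"
    have "norm x \<le> norm y + norm (t *\<^sub>R w)" unfolding y_def
      using norm_triangle_ineq[of "x + t *\<^sub>R w" "- (t *\<^sub>R w)"] by simp
    then have ny: "norm y \<ge> norm x - t" using w t by simp
    have fy: "f y > 0" by (rule pos) (use ny xt in linarith)
    have tl: "t \<le> 1 + norm y" using ny xt by linarith
    have "t * (f y / (1 + norm y)) \<le> f y"
    proof -
      have "t * (f y / (1 + norm y)) = (t / (1 + norm y)) * f y" by simp
      also have "\<dots> \<le> 1 * f y"
        using fy tl t by (intro mult_right_mono) (auto simp: divide_le_eq_1)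
      finally show ?thesis by simp
    qed
    moreover have "- norm (grad f y) \<le> inner (grad f y) w" by (rule cs_lower[OF w])
    then have "t * (- norm (grad f y)) \<le> t * inner (grad f y) w" by (rule mult_left_mono) (use t in simp)
    ultimately show ?thesis unfolding \<psi>_def K_def using bd[of y]
      by (simp add: y_def algebra_simps)
  qed
  have "t * sphere_int3 (\<lambda>w. \<psi> (x + t *\<^sub>R w)) = sphere_int3 (\<lambda>w. t * \<psi> (x + t *\<^sub>R w))"
    by (simp add: sphere_scale)
  also have "\<dots> \<le> sphere_int3 K" by (rule sphere_mono[OF cpsi2 cK le])
  also have "\<dots> = 4 * pi * u (x,t)" by (simp add: kir)
  finally have "t * sphere_int3 (\<lambda>w. \<psi> (x + t *\<^sub>R w)) \<le> 4 * pi * u (x,t)" .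
  then have "t / (4 * pi) * sphere_int3 (\<lambda>w. \<psi> (x + t *\<^sub>R w)) \<le> u (x,t)"
    by (simp add: field_simps pi_gt_zero)
  then show ?thesis by (simp add: \<psi>_def)
qed

lemma F_integrable:
  fixes S :: "real \<Rightarrow> real"
  assumes cS: "continuous_on UNIV S" and t: "t > 0"
  shows "(\<lambda>\<rho>. \<rho> / sqrt (t\<^sup>2 - \<rho>\<^sup>2) * S \<rho>) integrable_on {0..t}"
proof -
  define q where "q = (\<lambda>\<rho>::real. \<rho> / sqrt (t\<^sup>2 - \<rho>\<^sup>2))"
  have "(q has_integral ((- sqrt (t\<^sup>2 - t\<^sup>2)) - (- sqrt (t\<^sup>2 - 0\<^sup>2)))) {0..t}"
  proof (rule fundamental_theorem_of_calculus_interior)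
    show "0 \<le> t" using t by simp
    show "continuous_on {0..t} (\<lambda>\<rho>. - sqrt (t\<^sup>2 - \<rho>\<^sup>2))" by (intro continuous_intros)
    fix \<rho> assume r: "\<rho> \<in> {0<..<t}"
    then have pos: "t\<^sup>2 - \<rho>\<^sup>2 > 0" by (simp add: power_strict_mono)
    have d1: "((\<lambda>\<rho>. t\<^sup>2 - \<rho>\<^sup>2) has_real_derivative (0 - 2 * \<rho>)) (at \<rho>)"
      by (auto intro!: derivative_eq_intros)
    have d2: "((\<lambda>\<rho>. sqrt (t\<^sup>2 - \<rho>\<^sup>2)) has_real_derivative (inverse (sqrt (t\<^sup>2 - \<rho>\<^sup>2)) / 2 * (0 - 2 * \<rho>))) (at \<rho>)"
      by (rule DERIV_chain2[OF DERIV_real_sqrt[OF pos] d1])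
    have "((\<lambda>\<rho>. - sqrt (t\<^sup>2 - \<rho>\<^sup>2)) has_real_derivative - (inverse (sqrt (t\<^sup>2 - \<rho>\<^sup>2)) / 2 * (0 - 2 * \<rho>))) (at \<rho>)"
      by (rule DERIV_minus[OF d2])
    moreover have "- (inverse (sqrt (t\<^sup>2 - \<rho>\<^sup>2)) / 2 * (0 - 2 * \<rho>)) = q \<rho>"
      by (simp add: q_def field_simps)
    ultimately show "((\<lambda>\<rho>. - sqrt (t\<^sup>2 - \<rho>\<^sup>2)) has_vector_derivative q \<rho>) (at \<rho>)"
      by (simp add: has_real_derivative_iff_has_vector_derivative)
  qed
  then have qi: "q integrable_on {0..t}" by blast
  have qnn: "\<rho> \<in> {0..t} \<Longrightarrow> 0 \<le> q \<rho>" for \<rho>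
    by (auto simp: q_def intro!: divide_nonneg_nonneg real_sqrt_ge_zero power_mono)
  have qa: "q absolutely_integrable_on {0..t}" by (rule nonnegative_absolutely_integrable_1[OF qi qnn])
  have cS': "continuous_on {0..t} S" using cS continuous_on_subset by blast
  have "(\<lambda>\<rho>. S \<rho> * q \<rho>) absolutely_integrable_on {0..t}"
  proof (rule absolutely_integrable_bounded_measurable_product_real[OF _ _ _ qa])
    show "S \<in> borel_measurable (lebesgue_on {0..t})"
      by (rule continuous_imp_measurable_on_sets_lebesgue[OF cS']) simp
    show "{0..t} \<in> sets lebesgue" by simp
    show "bounded (S ` {0..t})"
      by (rule compact_imp_bounded, rule compact_continuous_image[OF cS']) simp
  qed
  then have "(\<lambda>\<rho>. S \<rho> * q \<rho>) integrable_on {0..t}" by (simp add: absolutely_integrable_on_def)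
  then show ?thesis by (simp add: q_def mult.commute)
qed

lemma equal_at_end:
  fixes A B :: "real \<Rightarrow> real"
  assumes "t > 0" "continuous_on {0..t} A" "continuous_on {0..t} B" "\<And>b. b \<in> {0..<t} \<Longrightarrow> A b = B b"
  shows "A t = B t"
proof -
  have c: "continuous_on (closure {0..<t}) (\<lambda>b. A b - B b)"
    using assms by (simp add: continuous_on_diff)
  have tc: "t \<in> closure {0..<t}" using assms(1) by simp
  have "A t - B t \<le> 0" by (rule continuous_le_on_closure[OF c tc]) (use assms(4) in simp)
  moreover have "A t - B t \<ge> 0" by (rule continuous_ge_on_closure[OF c tc]) (use assms(4) in simp)
  ultimately show ?thesis by simp
qed

lemma sub_identity:
  fixes S :: "real \<Rightarrow> real"
  assumes cS: "continuous_on UNIV S" and t: "t > 0"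
  shows "integral {0..pi} (\<lambda>\<theta>. sin \<theta> * S (t * sin \<theta>)) = 2 / t * integral {0..t} (\<lambda>\<rho>. \<rho> / sqrt (t\<^sup>2 - \<rho>\<^sup>2) * S \<rho>)"
proof -
  define h where "h = (\<lambda>\<theta>. sin \<theta> * S (t * sin \<theta>))"
  define F where "F = (\<lambda>\<rho>. \<rho> / sqrt (t\<^sup>2 - \<rho>\<^sup>2) * S \<rho>)"
  have ch: "continuous_on X h" for X
    unfolding h_def by (intro continuous_intros continuous_on_compose2[OF cS]) auto
  have hi: "h integrable_on {a..b}" for a b by (rule integrable_continuous_real[OF ch])
  have split: "integral {0..pi} h = integral {0..pi/2} h + integral {pi/2..pi} h"
    by (rule Henstock_Kurzweil_Integration.integral_combine[symmetric]) (auto intro: hi)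
  have refl: "integral {pi/2..pi} h = integral {0..pi/2} h"
  proof -
    have "((\<lambda>x. (-1) *\<^sub>R h (pi - x)) has_integral (integral {(pi - 0)..(pi - pi/2)} h - integral {(pi - pi/2)..(pi - 0)} h)) {0..pi/2}"
    proof (rule has_integral_substitution_general[where s = "{}" and c = "pi/2" and d = pi])
      show "(\<lambda>x. pi - x) ` {0..pi/2} \<subseteq> {pi/2..pi}" by auto
      show "continuous_on {pi/2..pi} h" by (rule ch)
      show "continuous_on {0..pi/2} (\<lambda>x. pi - x)" by (intro continuous_intros)
      fix x show "((\<lambda>x. pi - x) has_real_derivative -1) (at x within {0..pi/2})"
        by (auto intro!: derivative_eq_intros)
    qed auto
    then have "((\<lambda>x. - h (pi - x)) has_integral - integral {pi/2..pi} h) {0..pi/2}" by simp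
    then have "integral {0..pi/2} (\<lambda>x. - h (pi - x)) = - integral {pi/2..pi} h" by (rule integral_unique)
    moreover have "(\<lambda>x. h (pi - x)) = h" by (simp add: h_def fun_eq_iff)
    ultimately show ?thesis by (metis integral_neg neg_equal_iff_equal)
  qed
  define A where "A = (\<lambda>b. t * integral {0..arcsin (b / t)} h)"
  define B where "B = (\<lambda>b. integral {0..b} F)"
  have Fi: "F integrable_on {0..t}" unfolding F_def by (rule F_integrable[OF cS t])
  have cB: "continuous_on {0..t} B" unfolding B_def by (rule indefinite_integral_continuous_1[OF Fi])
  have cA: "continuous_on {0..t} A"
  proof -
    have c1: "continuous_on {0..pi/2} (\<lambda>y. integral {0..y} h)"
      by (rule indefinite_integral_continuous_1[OF hi])
    have bd: "\<forall>b\<in>{0..t}. -1 \<le> b / t \<and> b / t \<le> 1"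
    proof
      fix b assume "b \<in> {0..t}"
      then have "0 \<le> b / t" "b / t \<le> 1" using t by (auto simp: divide_le_eq_1)
      then show "-1 \<le> b / t \<and> b / t \<le> 1" by simp
    qed
    have c2: "continuous_on {0..t} (\<lambda>b. arcsin (b / t))"
      by (intro continuous_intros bd) (use t in auto)
    have sub: "(\<lambda>b. arcsin (b / t)) ` {0..t} \<subseteq> {0..pi/2}"
    proof clarify
      fix b assume "b \<in> {0..t}"
      then have "-1 \<le> b / t" "b / t \<le> 1" "0 \<le> b / t" using bd t by auto
      then show "arcsin (b / t) \<in> {0..pi/2}" using arcsin_ubound arcsin_nonneg by auto
    qed
    show ?thesis unfolding A_def
      by (intro continuous_intros continuous_on_compose2[OF c1 c2 sub])
  qed
  have eqb: "A b = B b" if b: "b \<in> {0..<t}" for b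
  proof -
    define c where "c = arcsin (b / t)"
    have bt: "0 \<le> b / t" "b / t < 1" using b t by auto
    have c0: "0 \<le> c" "c < pi/2" unfolding c_def using bt
      by (auto intro!: arcsin_nonneg arcsin_less_arcsin[where y=1, simplified])
    have sc: "t * sin c = b" unfolding c_def using bt t by simp
    have "((\<lambda>\<theta>. (t * cos \<theta>) *\<^sub>R F (t * sin \<theta>)) has_integral integral {t * sin 0..t * sin c} F) {0..c}"
    proof (rule has_integral_substitution_strong[where s = "{}" and c = 0 and d = b])
      show "0 \<le> c" by (rule c0)
      show "t * sin 0 \<le> t * sin c" using sc b by simp
      show "(\<lambda>\<theta>. t * sin \<theta>) ` {0..c} \<subseteq> {0..b}"
      proof clarify
        fix \<theta> assume th: "\<theta> \<in> {0..c}"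
        have "sin \<theta> \<le> sin c" using th c0 by (intro sin_monotone_2pi_le) auto
        moreover have "sin \<theta> \<ge> 0" using th c0 by (intro sin_ge_zero) auto
        ultimately show "t * sin \<theta> \<in> {0..b}" using sc t by (auto intro: mult_left_mono)
      qed
      have nz: "\<forall>\<rho>\<in>{0..b}. sqrt (t\<^sup>2 - \<rho>\<^sup>2) \<noteq> 0"
      proof
        fix \<rho> assume "\<rho> \<in> {0..b}"
        then have "\<rho>\<^sup>2 < t\<^sup>2" using b by (auto intro!: power_strict_mono)
        then show "sqrt (t\<^sup>2 - \<rho>\<^sup>2) \<noteq> 0" by simp
      qed
      show "continuous_on {0..b} F" unfolding F_def
        by (intro continuous_intros continuous_on_subset[OF cS] nz) auto
      show "continuous_on {0..c} (\<lambda>\<theta>. t * sin \<theta>)" by (intro continuous_intros)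
      fix \<theta> assume "\<theta> \<in> {0..c} - {}"
      show "((\<lambda>\<theta>. t * sin \<theta>) has_real_derivative t * cos \<theta>) (at \<theta> within {0..c})"
        by (auto intro!: derivative_eq_intros)
    qed auto
    then have i1: "integral {0..c} (\<lambda>\<theta>. (t * cos \<theta>) * F (t * sin \<theta>)) = B b"
      using sc by (simp add: B_def integral_unique)
    have "integral {0..c} (\<lambda>\<theta>. (t * cos \<theta>) * F (t * sin \<theta>)) = integral {0..c} (\<lambda>\<theta>. t * h \<theta>)"
    proof (rule integral_cong)
      fix \<theta> assume th: "\<theta> \<in> {0..c}"
      have cp: "cos \<theta> > 0" using th c0 by (intro cos_gt_zero_pi) auto
      have "sqrt (t\<^sup>2 - (t * sin \<theta>)\<^sup>2) = sqrt ((t * cos \<theta>)\<^sup>2)"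
        by (simp add: power_mult_distrib cos_squared_eq algebra_simps)
      also have "\<dots> = t * cos \<theta>" using cp t by simp
      finally have sq: "sqrt (t\<^sup>2 - (t * sin \<theta>)\<^sup>2) = t * cos \<theta>" .
      show "t * cos \<theta> * F (t * sin \<theta>) = t * h \<theta>"
        unfolding F_def h_def sq using cp t by (simp add: field_simps)
    qed
    then show ?thesis using i1 by (simp add: A_def c_def)
  qed
  have "A t = B t" by (rule equal_at_end[OF t cA cB eqb])
  then have "t * integral {0..pi/2} h = integral {0..t} F" using t by (simp add: A_def B_def)
  then show ?thesis using split refl t unfolding h_def[symmetric] F_def[symmetric]
    by (simp add: field_simps)
qed

definition P3 :: "real^3 \<Rightarrow> real^2" where "P3 y = vector [y$1, y$2]"
definition E2 :: "real^2 \<Rightarrow> real^3" where "E2 v = vector [v$1, v$2, 0]"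
definition Q3 :: "(real^3) \<times> real \<Rightarrow> (real^2) \<times> real" where "Q3 p = (P3 (fst p), snd p)"

lemma linear_P3: "linear P3"
  by (rule linearI) (simp_all add: P3_def vec_eq_iff forall_2)
lemma linear_E2: "linear E2"
  by (rule linearI) (simp_all add: E2_def vec_eq_iff forall_3)
lemma bl_P3: "bounded_linear P3" using linear_P3 by (simp add: linear_conv_bounded_linear)
lemma bl_E2: "bounded_linear E2" using linear_E2 by (simp add: linear_conv_bounded_linear)
lemma inner_E2: "inner (E2 v) h = inner v (P3 h)"
  by (simp add: E2_def P3_def inner_vec_def sum_2 sum_3)
lemma P3_E2[simp]: "P3 (E2 v) = v"
  by (simp add: E2_def P3_def vec_eq_iff forall_2)
lemma P3_axis: "P3 (axis 1 1) = axis 1 1" "P3 (axis 2 1) = axis 2 1" "P3 (axis 3 1) = 0"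
  by (simp_all add: P3_def vec_eq_iff forall_2 axis_def)

lemma norm_P3: "norm (P3 w) \<le> norm w"
proof -
  have "norm (P3 w) ^ 2 \<le> norm w ^ 2"
    by (simp add: power2_norm_eq_inner P3_def inner_vec_def sum_2 sum_3)
  then show ?thesis by (simp add: power2_le_iff_abs_le)
qed

lemma sum_Basis_vec2: "(\<Sum>b\<in>(Basis::(real^2) set). f b) = f (axis 1 1) + f (axis 2 1)"
proof -
  have B: "(Basis::(real^2) set) = {axis 1 1, axis 2 1}"
    by (auto simp: Basis_vec_def UNIV_2)
  have d: "axis 1 1 \<noteq> (axis 2 1 :: real^2)" by (auto simp: axis_eq_axis)
  show ?thesis unfolding B using d by simp
qed

lemma Q3_deriv: "(Q3 has_derivative Q3) F"
proof -
  have "bounded_linear Q3" unfolding Q3_def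
    by (intro bounded_linear_Pair bounded_linear_compose[OF bl_P3] bounded_linear_fst bounded_linear_snd)
  then show ?thesis by (rule bounded_linear_imp_has_derivative)
qed

lemma Q3_HS: "p \<in> UNIV \<times> {0..} \<Longrightarrow> Q3 p \<in> UNIV \<times> {0..}"
  by (cases p) (auto simp: Q3_def)

lemma comp_deriv:
  fixes F :: "(real^2) \<times> real \<Rightarrow> 'b::real_normed_vector"
  assumes p: "p \<in> UNIV \<times> {0..}"
    and d: "(F has_derivative (\<lambda>(h,\<tau>). L h + \<tau> *\<^sub>R c)) (at (Q3 p) within UNIV \<times> {0..})"
  shows "((\<lambda>p. F (Q3 p)) has_derivative (\<lambda>(h,\<tau>). L (P3 h) + \<tau> *\<^sub>R c)) (at p within UNIV \<times> {0..})"
proof -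
  have "((\<lambda>p. F (Q3 p)) has_derivative (\<lambda>x. (\<lambda>(h,\<tau>). L h + \<tau> *\<^sub>R c) (Q3 x))) (at p within UNIV \<times> {0..})"
  proof (rule has_derivative_in_compose[OF Q3_deriv])
    show "(F has_derivative (\<lambda>(h,\<tau>). L h + \<tau> *\<^sub>R c)) (at (Q3 p) within Q3 ` (UNIV \<times> {0..}))"
      by (rule has_derivative_subset[OF d]) (rule image_subsetI, rule Q3_HS)
  qed
  moreover have "(\<lambda>x. (\<lambda>(h,\<tau>). L h + \<tau> *\<^sub>R c) (Q3 x)) = (\<lambda>(h,\<tau>). L (P3 h) + \<tau> *\<^sub>R c)"
    by (auto simp: Q3_def fun_eq_iff)
  ultimately show ?thesis by simp
qed

lemma descent:
  fixes u :: "(real^2) \<times> real \<Rightarrow> real"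
  assumes "wgen u Gx Gxt Utx Ut Utt Hx"
  shows "wgen (\<lambda>p. u (Q3 p)) (\<lambda>p. E2 (Gx (Q3 p))) (\<lambda>p. E2 (Gxt (Q3 p))) (\<lambda>p. E2 (Utx (Q3 p)))
     (\<lambda>p. Ut (Q3 p)) (\<lambda>p. Utt (Q3 p)) (\<lambda>p h. E2 (Hx (Q3 p) (P3 h)))"
proof -
  interpret w2: wgen u Gx Gxt Utx Ut Utt Hx by (rule assms)
  have cQ: "continuous_on X Q3" for X unfolding Q3_def
    by (intro continuous_intros linear_continuous_on bounded_linear_compose[OF bl_P3 bounded_linear_fst])
  have sQ: "Q3 ` (UNIV \<times> {0..}) \<subseteq> UNIV \<times> {0..}" by (rule image_subsetI, rule Q3_HS)
  have cE: "continuous_on X E2" for X by (rule linear_continuous_on[OF bl_E2])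
  show ?thesis
  proof (rule wgen.intro)
    fix p :: "(real^3) \<times> real" assume p: "p \<in> UNIV \<times> {0..}"
    have "((\<lambda>p. u (Q3 p)) has_derivative (\<lambda>(h,\<tau>). inner (Gx (Q3 p)) (P3 h) + \<tau> *\<^sub>R Ut (Q3 p))) (at p within UNIV \<times> {0..})"
      using comp_deriv[OF p, of u "\<lambda>h. inner (Gx (Q3 p)) h" "Ut (Q3 p)"] w2.du[OF Q3_HS[OF p]] by simp
    then show "((\<lambda>p. u (Q3 p)) has_derivative (\<lambda>(h,\<tau>). inner (E2 (Gx (Q3 p))) h + \<tau> * Ut (Q3 p))) (at p within UNIV \<times> {0..})"
      by (simp add: inner_E2)
    have "((\<lambda>p. Gx (Q3 p)) has_derivative (\<lambda>(h,\<tau>). Hx (Q3 p) (P3 h) + \<tau> *\<^sub>R Gxt (Q3 p))) (at p within UNIV \<times> {0..})"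
      using comp_deriv[OF p w2.dG[OF Q3_HS[OF p]]] .
    then have "((\<lambda>p. E2 (Gx (Q3 p))) has_derivative (\<lambda>v. E2 ((\<lambda>(h,\<tau>). Hx (Q3 p) (P3 h) + \<tau> *\<^sub>R Gxt (Q3 p)) v))) (at p within UNIV \<times> {0..})"
      by (rule bounded_linear.has_derivative[OF bl_E2])
    moreover have "(\<lambda>v. E2 ((\<lambda>(h,\<tau>). Hx (Q3 p) (P3 h) + \<tau> *\<^sub>R Gxt (Q3 p)) v))
        = (\<lambda>(h,\<tau>). E2 (Hx (Q3 p) (P3 h)) + \<tau> *\<^sub>R E2 (Gxt (Q3 p)))"
      by (auto simp: fun_eq_iff linear_add[OF linear_E2] linear_scale[OF linear_E2])
    ultimately show "((\<lambda>p. E2 (Gx (Q3 p))) has_derivative (\<lambda>(h,\<tau>). E2 (Hx (Q3 p) (P3 h)) + \<tau> *\<^sub>R E2 (Gxt (Q3 p)))) (at p within UNIV \<times> {0..})"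
      by simp
    have "((\<lambda>p. Ut (Q3 p)) has_derivative (\<lambda>(h,\<tau>). inner (Utx (Q3 p)) (P3 h) + \<tau> *\<^sub>R Utt (Q3 p))) (at p within UNIV \<times> {0..})"
      using comp_deriv[OF p, of Ut "\<lambda>h. inner (Utx (Q3 p)) h" "Utt (Q3 p)"] w2.dU[OF Q3_HS[OF p]] by simp
    then show "((\<lambda>p. Ut (Q3 p)) has_derivative (\<lambda>(h,\<tau>). inner (E2 (Utx (Q3 p))) h + \<tau> * Utt (Q3 p))) (at p within UNIV \<times> {0..})"
      by (simp add: inner_E2)
    have "Utt (Q3 p) = (\<Sum>b\<in>Basis. inner (Hx (Q3 p) b) b)" by (rule w2.wave[OF Q3_HS[OF p]])
    also have "\<dots> = (\<Sum>b\<in>Basis. inner (E2 (Hx (Q3 p) (P3 b))) b)"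
      unfolding sum_Basis_vec2 sum_Basis_vec3 inner_E2
      by (simp add: P3_axis linear_0[OF w2.lin])
    finally show "Utt (Q3 p) = (\<Sum>b\<in>Basis. inner (E2 (Hx (Q3 p) (P3 b))) b)" .
  next
    fix p :: "(real^3) \<times> real"
    show "linear (\<lambda>h. E2 (Hx (Q3 p) (P3 h)))"
      by (intro linear_compose[OF linear_P3, unfolded o_def] linear_compose[OF w2.lin linear_E2, unfolded o_def])
  next
    show "continuous_on (UNIV \<times> {0..}) (\<lambda>p. u (Q3 p))" by (rule continuous_on_compose2[OF w2.cu cQ sQ])
    show "continuous_on (UNIV \<times> {0..}) (\<lambda>p. E2 (Gx (Q3 p)))"
      by (rule continuous_on_compose2[OF cE continuous_on_compose2[OF w2.cG cQ sQ]]) auto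
    show "continuous_on (UNIV \<times> {0..}) (\<lambda>p. Ut (Q3 p))" by (rule continuous_on_compose2[OF w2.cU cQ sQ])
    show "continuous_on (UNIV \<times> {0..}) (\<lambda>p. E2 (Gxt (Q3 p)))"
      by (rule continuous_on_compose2[OF cE continuous_on_compose2[OF w2.cGt cQ sQ]]) auto
    show "continuous_on (UNIV \<times> {0..}) (\<lambda>p. E2 (Utx (Q3 p)))"
      by (rule continuous_on_compose2[OF cE continuous_on_compose2[OF w2.cUx cQ sQ]]) auto
    show "continuous_on (UNIV \<times> {0..}) (\<lambda>p. Utt (Q3 p))" by (rule continuous_on_compose2[OF w2.cUtt cQ sQ])
    fix v
    show "continuous_on (UNIV \<times> {0..}) (\<lambda>p. E2 (Hx (Q3 p) (P3 v)))"
      by (rule continuous_on_compose2[OF cE continuous_on_compose2[OF w2.cH cQ sQ]]) auto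
  qed
qed

lemma vector2_eq: "(vector [a,b] :: real^2) = a *\<^sub>R axis 1 1 + b *\<^sub>R axis 2 1"
  by (simp add: vec_eq_iff forall_2 axis_def)

lemma main2:
  fixes f g :: "real^2 \<Rightarrow> real" and u :: "(real^2) \<times> real \<Rightarrow> real"
  assumes W: "wave_sol u f g"
    and pos: "\<And>x. norm x \<ge> R \<Longrightarrow> f x > 0"
    and t: "t > 0" and xt: "norm x - t \<ge> max R (t - 1)"
  shows "u (x, t) \<ge> 1 / (2 * pi) * integral {0..t} (\<lambda>\<rho>. \<rho> / sqrt (t\<^sup>2 - \<rho>\<^sup>2) *
               sphere_int2 (\<lambda>\<omega>.
                 f (x + \<rho> *\<^sub>R \<omega>) / (1 + norm (x + \<rho> *\<^sub>R \<omega>)) - norm (grad f (x + \<rho> *\<^sub>R \<omega>))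
                 + g (x + \<rho> *\<^sub>R \<omega>)))"
proof -
  obtain Gx Gxt Utx Ut Utt Hx where wg: "wgen u Gx Gxt Utx Ut Utt Hx"
    and bd: "\<And>y. u (y,0) = f y \<and> Ut (y,0) = g y \<and> Gx (y,0) = grad f y"
    using wave_sol_wgen[OF W] by blast
  interpret w2: wgen u Gx Gxt Utx Ut Utt Hx by (rule wg)
  interpret w3: wdata "\<lambda>p. u (Q3 p)" "\<lambda>p. E2 (Gx (Q3 p))" "\<lambda>p. E2 (Gxt (Q3 p))" "\<lambda>p. E2 (Utx (Q3 p))"
     "\<lambda>p. Ut (Q3 p)" "\<lambda>p. Utt (Q3 p)" "\<lambda>p h. E2 (Hx (Q3 p) (P3 h))"
    by (rule wgen_wdata[OF descent[OF wg]])
  have cb0: "continuous_on UNIV (\<lambda>y::real^2. (y, 0::real))" by (intro continuous_intros)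
  have sub0: "range (\<lambda>y::real^2. (y, 0::real)) \<subseteq> UNIV \<times> {0..}" by auto
  have cf: "continuous_on UNIV f"
    using continuous_on_compose2[OF w2.cu cb0 sub0] bd by simp
  have cgr: "continuous_on UNIV (\<lambda>y. grad f y)"
    using continuous_on_compose2[OF w2.cG cb0 sub0] bd by simp
  have cg: "continuous_on UNIV g"
    using continuous_on_compose2[OF w2.cU cb0 sub0] bd by simp
  define \<psi> where "\<psi> = (\<lambda>y. f y / (1 + norm y) - norm (grad f y) + g y)"
  have nz: "\<And>y::real^2. 1 + norm y \<noteq> 0" by (smt (verit) norm_ge_zero)
  have cpsi: "continuous_on UNIV \<psi>" unfolding \<psi>_def
    by (intro continuous_intros cf cgr cg) (auto simp: nz)
  define K where "K = (\<lambda>w. t * Ut (Q3 (E2 x + t *\<^sub>R w, 0)) + u (Q3 (E2 x + t *\<^sub>R w, 0))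
       + t * inner (E2 (Gx (Q3 (E2 x + t *\<^sub>R w, 0)))) w)"
  have kir: "4 * pi * u (Q3 (E2 x, t)) = sphere_int3 K" unfolding K_def by (rule w3.kirchhoff[OF t])
  have Qx: "Q3 (E2 x, t) = (x, t)" by (simp add: Q3_def)
  have Qw: "Q3 (E2 x + t *\<^sub>R w, 0) = (x + t *\<^sub>R P3 w, 0)" for w
    by (simp add: Q3_def linear_add[OF linear_P3] linear_scale[OF linear_P3])
  have Keq: "K = (\<lambda>w. t * g (x + t *\<^sub>R P3 w) + f (x + t *\<^sub>R P3 w) + t * inner (grad f (x + t *\<^sub>R P3 w)) (P3 w))"
    by (simp add: K_def Qw bd inner_E2 fun_eq_iff)
  have cP: "continuous_on UNIV P3" by (rule linear_continuous_on[OF bl_P3])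
  have cK: "continuous_on UNIV K" unfolding Keq
    by (intro continuous_intros continuous_on_compose2[OF cf] continuous_on_compose2[OF cg]
          continuous_on_compose2[OF cgr] continuous_on_compose2[OF cP]; auto)
  have cpsi2: "continuous_on UNIV (\<lambda>w. t * \<psi> (x + t *\<^sub>R P3 w))"
    by (intro continuous_intros continuous_on_compose2[OF cpsi] continuous_on_compose2[OF cP]; auto)
  have le: "t * \<psi> (x + t *\<^sub>R P3 w) \<le> K w" if w: "norm w = 1" for w
  proof -
    define y where "y = x + t *\<^sub>R P3 w"
    have nP: "norm (P3 w) \<le> 1" using norm_P3[of w] w by simp
    have "norm x \<le> norm y + norm (t *\<^sub>R P3 w)" unfolding y_def
      using norm_triangle_ineq[of "x + t *\<^sub>R P3 w" "- (t *\<^sub>R P3 w)"] by simp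
    moreover have "norm (t *\<^sub>R P3 w) \<le> t" using nP t by (simp add: mult_left_le)
    ultimately have ny: "norm y \<ge> norm x - t" by simp
    have fy: "f y > 0" by (rule pos) (use ny xt in linarith)
    have tl: "t \<le> 1 + norm y" using ny xt by linarith
    have "t * (f y / (1 + norm y)) \<le> f y"
    proof -
      have "t * (f y / (1 + norm y)) = (t / (1 + norm y)) * f y" by simp
      also have "\<dots> \<le> 1 * f y"
        using fy tl t by (intro mult_right_mono) (auto simp: divide_le_eq_1)
      finally show ?thesis by simp
    qed
    moreover have "- norm (grad f y) \<le> inner (grad f y) (P3 w)"
    proof -
      have "\<bar>inner (grad f y) (P3 w)\<bar> \<le> norm (grad f y) * norm (P3 w)" by (rule Cauchy_Schwarz_ineq2)
      also have "\<dots> \<le> norm (grad f y)" using nP by (simp add: mult_left_le)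
      finally show ?thesis by (simp add: abs_le_iff)
    qed
    then have "t * (- norm (grad f y)) \<le> t * inner (grad f y) (P3 w)" by (rule mult_left_mono) (use t in simp)
    ultimately show ?thesis unfolding \<psi>_def Keq
      by (simp add: y_def algebra_simps)
  qed
  have ineq: "t * sphere_int3 (\<lambda>w. \<psi> (x + t *\<^sub>R P3 w)) \<le> 4 * pi * u (x,t)"
  proof -
    have "t * sphere_int3 (\<lambda>w. \<psi> (x + t *\<^sub>R P3 w)) = sphere_int3 (\<lambda>w. t * \<psi> (x + t *\<^sub>R P3 w))"
      by (simp add: sphere_scale)
    also have "\<dots> \<le> sphere_int3 K" by (rule sphere_mono[OF cpsi2 cK le])
    also have "\<dots> = 4 * pi * u (x,t)" using kir Qx by simp
    finally show ?thesis .
  qed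
  define S where "S = (\<lambda>\<rho>. sphere_int2 (\<lambda>\<omega>. \<psi> (x + \<rho> *\<^sub>R \<omega>)))"
  have cS: "continuous_on UNIV S"
  proof -
    have "continuous_on UNIV (\<lambda>\<rho>. integral (cbox 0 (2*pi)) (\<lambda>\<phi>. \<psi> (x + \<rho> *\<^sub>R vector [cos \<phi>, sin \<phi>])))"
    proof (rule integral_continuous_on_param)
      have "continuous_on (UNIV \<times> cbox 0 (2*pi)) (\<lambda>z. \<psi> (x + fst z *\<^sub>R vector [cos (snd z), sin (snd z)]))"
        unfolding vector2_eq
        by (intro continuous_intros continuous_on_compose2[OF cpsi]) auto
      then show "continuous_on (UNIV \<times> cbox 0 (2*pi)) (\<lambda>(\<rho>, \<phi>). \<psi> (x + \<rho> *\<^sub>R vector [cos \<phi>, sin \<phi>]))"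
        by (simp add: case_prod_beta')
    qed
    then show ?thesis by (simp add: S_def sphere_int2_def cbox_interval)
  qed
  have conv: "sphere_int3 (\<lambda>w. \<psi> (x + t *\<^sub>R P3 w)) = integral {0..pi} (\<lambda>\<theta>. sin \<theta> * S (t * sin \<theta>))"
    unfolding sphere_int3_def S_def sphere_int2_def
  proof (rule integral_cong)
    fix \<theta> :: real
    have "x + t *\<^sub>R P3 (vector [sin \<theta> * cos \<phi>, sin \<theta> * sin \<phi>, cos \<theta>]) = x + (t * sin \<theta>) *\<^sub>R vector [cos \<phi>, sin \<phi>]" for \<phi>
      by (simp add: P3_def vec_eq_iff forall_2)
    then show "integral {0..2*pi} (\<lambda>\<phi>. \<psi> (x + t *\<^sub>R P3 (vector [sin \<theta> * cos \<phi>, sin \<theta> * sin \<phi>, cos \<theta>])) * sin \<theta>)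
        = sin \<theta> * integral {0..2*pi} (\<lambda>\<phi>. \<psi> (x + (t * sin \<theta>) *\<^sub>R vector [cos \<phi>, sin \<phi>]))"
      by (simp add: mult.commute)
  qed
  have "t * (2 / t * integral {0..t} (\<lambda>\<rho>. \<rho> / sqrt (t\<^sup>2 - \<rho>\<^sup>2) * S \<rho>)) \<le> 4 * pi * u (x,t)"
    using ineq conv sub_identity[OF cS t] by simp
  then have "1 / (2 * pi) * integral {0..t} (\<lambda>\<rho>. \<rho> / sqrt (t\<^sup>2 - \<rho>\<^sup>2) * S \<rho>) \<le> u (x,t)"
    using t by (simp add: field_simps pi_gt_zero)
  then show ?thesis by (simp add: S_def \<psi>_def)
qed

theorem proposition3p4:
  shows
  "(\<forall>(f :: real^3 \<Rightarrow> real) (g :: real^3 \<Rightarrow> real) (u :: (real^3) \<times> real \<Rightarrow> real) (R::real) (C0::real) (\<kappa>::real).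
      cont_diff 3 f UNIV \<and> cont_diff 2 g UNIV \<and> R > 0 \<and> C0 > 0 \<and> \<kappa> > 0 \<and>
      (\<forall>x. norm x \<ge> R \<longrightarrow> f x > 0 \<and>
          f x / (1 + norm x) - norm (grad f x) + g x \<ge> C0 / (1 + norm x) powr (1 + \<kappa>)) \<and>
      wave_sol u f g
      \<longrightarrow> (\<forall>x t. t > 0 \<and> norm x - t \<ge> max R (t - 1) \<longrightarrow>
            u (x, t) \<ge> t / (4 * pi) * sphere_int3 (\<lambda>\<omega>.
               f (x + t *\<^sub>R \<omega>) / (1 + norm (x + t *\<^sub>R \<omega>)) - norm (grad f (x + t *\<^sub>R \<omega>))
               + g (x + t *\<^sub>R \<omega>))))
   \<and>
   (\<forall>(f :: real^2 \<Rightarrow> real) (g :: real^2 \<Rightarrow> real) (u :: (real^2) \<times> real \<Rightarrow> real) (R::real) (C0::real) (\<kappa>::real).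
      cont_diff 3 f UNIV \<and> cont_diff 2 g UNIV \<and> R > 0 \<and> C0 > 0 \<and> \<kappa> > 0 \<and>
      (\<forall>x. norm x \<ge> R \<longrightarrow> f x > 0 \<and>
          f x / (1 + norm x) - norm (grad f x) + g x \<ge> C0 / (1 + norm x) powr (1 + \<kappa>)) \<and>
      wave_sol u f g
      \<longrightarrow> (\<forall>x t. t > 0 \<and> norm x - t \<ge> max R (t - 1) \<longrightarrow>
            u (x, t) \<ge> 1 / (2 * pi) * integral {0..t} (\<lambda>\<rho>. \<rho> / sqrt (t\<^sup>2 - \<rho>\<^sup>2) *
               sphere_int2 (\<lambda>\<omega>.
                 f (x + \<rho> *\<^sub>R \<omega>) / (1 + norm (x + \<rho> *\<^sub>R \<omega>)) - norm (grad f (x + \<rho> *\<^sub>R \<omega>))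
                 + g (x + \<rho> *\<^sub>R \<omega>)))))"
proof (intro conjI allI impI, goal_cases)
  case (1 f g u R C0 \<kappa> x t)
  then have W: "wave_sol u f g" and pos: "\<And>y. norm y \<ge> R \<Longrightarrow> f y > 0"
    and t: "t > 0" and xt: "norm x - t \<ge> max R (t - 1)" by auto
  show ?case by (rule main3[OF W pos t xt])
next
  case (2 f g u R C0 \<kappa> x t)
  then have W: "wave_sol u f g" and pos: "\<And>y. norm y \<ge> R \<Longrightarrow> f y > 0"
    and t: "t > 0" and xt: "norm x - t \<ge> max R (t - 1)" by auto
  show ?case by (rule main2[OF W pos t xt])
qed

end
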